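(* Let $q$ be a prime power, let $\ell\ge 0$ and $n>1$ be integers. For $\vec{c}=(c_1,\ldots,c_{\ell})\in\mathbb{F}_q^{\ell}$ we have \begin{align*} S_{q}(n;\vec{c}) &=\frac{1}{2}\sum_{\vec{a}\in \mathbb{F}_{q}^{\ell}}[\![\psi_{(1,\vec{a})}(\vec{a})=\vec{c}]\!]\, S_q(n/2;\vec{a}) +I_q\big(n;\phi_n^{-1}(\vec{c})\big)-\frac{1}{2}\sum_{\substack{\vec{b}=(b_0,\ldots,b_\ell)\in \mathbb{F}_{q}^{\ell+1}\\ b_0\neq 0}} I_q\big(n;\psi^{-1}_{\vec{b}}(\vec{c}),\vec{b}\big), \end{align*} where $(1,\vec a)$ denotes the vector $(1,a_1,\ldots,a_\ell)\in\mathbb{F}_q^{\ell+1}$.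
   Context: $\mathbb{F}_q$ is the finite field with $q$ elements, of characteristic $p$. A monic polynomial $f\in\mathbb{F}_q[x]$ is self-reciprocal if $x^{\deg f}f(1/x)=f(x)$. $[\![P]\!]$ is $1$ if $P$ is true and $0$ otherwise. For integers $d\ge1$, $\ell,t\ge 0$, $\vec a=(a_1,\ldots,a_\ell)\in\mathbb{F}_q^\ell$ and $\vec b=(b_0,\ldots,b_{t-1})\in\mathbb{F}_q^{t}$, $I_q(d;\vec a,\vec b)$ is the number of monic irreducible $f\in\mathbb{F}_q[x]$ of degree $d$ with $[x^{d-j}]f=a_j$ for $1\le j\le \ell$ and $[x^j]f=b_j$ for $0\le j\le t-1$; $I_q(d;\vec a)$ is the same with no condition on the low-order coefficients ($t=0$). $S_q(n;\vec a)$ is the number of self-reciprocal monic irreducible $f\in\mathbb{F}_q[x]$ of degree $2n$ with $[x^{2n-j}]f=a_j$ for $1\le j\le\ell$; by convention $S_q(n/2;\vec a)=0$ when $n$ is odd. $\phi_n:\mathbb{F}_q^\ell\to\mathbb{F}_q^\ell$ is the bijection $(g_1,\ldots,g_\ell)\mapsto(f_1,\ldots,f_\ell)$ given by $f_k=\sum_{0\le j\le k/2}\binom{n+2j-k}{j}g_{k-2j}$ for $1\le k\le \ell$, where $g_0=1$ and the binomial coefficients are taken in $\mathbb{F}_q$. (This records the relation between the coefficients $g_k=[x^{n-k}]g$ of a monic $g$ of degree $n$ and $f_k=[x^{2n-k}]f$ where $f(x)=x^ng(x+1/x)$.) For $\vec b=(b_0,b_1,\ldots,b_\ell)\in\mathbb{F}_q^{\ell+1}$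 with $b_0\ne0$, $\psi_{\vec b}:\mathbb{F}_q^\ell\to\mathbb{F}_q^\ell$ is the bijection $\vec a\mapsto\vec c$ with $c_k=a_k+b_0^{-1}b_k+b_0^{-1}\sum_{j=1}^{k-1}a_jb_{k-j}$ for $1\le k\le\ell$; $\phi_n^{-1},\psi_{\vec b}^{-1}$ denote the inverse maps. *)

theory Defs
  imports "HOL-Computational_Algebra.Computational_Algebra"
begin

text \<open>Vectors in F_q^l are lists of length l.  For a = (a_1,...,a_l) we use a!(j-1) = a_j;
  for b = (b_0,...,b_t-1) we use b!j = b_j.  The finite field F_q is a type of class
  finite and field; q = CARD('a).\<close>

definition topc :: "'a::zero poly \<Rightarrow> nat \<Rightarrow> nat \<Rightarrow> 'a" where
  "topc f d j = (if j \<le> d then coeff f (d - j) else 0)"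

definition I_count :: "nat \<Rightarrow> 'a::{finite,field} list \<Rightarrow> 'a list \<Rightarrow> nat" where
  "I_count d a b = card {f :: 'a poly. lead_coeff f = 1 \<and> degree f = d \<and> irreducible f \<and>
      (\<forall>j\<in>{1..length a}. topc f d j = a ! (j - 1)) \<and>
      (\<forall>j<length b. coeff f j = b ! j)}"

text \<open>S_q(n; a): self-reciprocal (x^deg f f(1/x) = f, i.e. reflect_poly f = f) monic
  irreducible of degree 2n.\<close>
definition S_count :: "nat \<Rightarrow> 'a::{finite,field} list \<Rightarrow> nat" where
  "S_count n a = card {f :: 'a poly. lead_coeff f = 1 \<and> degree f = 2 * n \<and> irreducible f \<and>
      reflect_poly f = f \<and>
      (\<forall>j\<in>{1..length a}. topc f (2 * n) j = a ! (j - 1))}"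

definition S_half :: "nat \<Rightarrow> 'a::{finite,field} list \<Rightarrow> nat" where
  "S_half n a = (if even n then S_count (n div 2) a else 0)"

text \<open>Integer binomial coefficient with arbitrary integer top (standard extension
  binom(m,j) = (-1)^j binom(j-m-1,j) for m < 0), then mapped into the field.\<close>
definition ibinom :: "int \<Rightarrow> nat \<Rightarrow> int" where
  "ibinom m j = (if m \<ge> 0 then int (nat m choose j)
                 else (-1) ^ j * int (nat (int j - m - 1) choose j))"

definition phi :: "nat \<Rightarrow> 'a::field list \<Rightarrow> 'a list" where
  "phi n g = map (\<lambda>k. \<Sum>j\<in>{0..k div 2}.
        of_int (ibinom (int n + 2 * int j - int k) j) *
        (if k - 2 * j = 0 then 1 else g ! (k - 2 * j - 1))) [1..<length g + 1]"

definition phi_inv :: "nat \<Rightarrow> 'a::field list \<Rightarrow> 'a list" where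
  "phi_inv n c = inv_into {g. length g = length c} (phi n) c"

definition psi :: "'a::field list \<Rightarrow> 'a list \<Rightarrow> 'a list" where
  "psi b a = map (\<lambda>k. a ! (k - 1) + inverse (b ! 0) * b ! k +
        inverse (b ! 0) * (\<Sum>j\<in>{1..<k}. a ! (j - 1) * b ! (k - j))) [1..<length a + 1]"

definition psi_inv :: "'a::field list \<Rightarrow> 'a list \<Rightarrow> 'a list" where
  "psi_inv b c = inv_into {a. length a = length c} (psi b) c"

end

theory Submission
  imports Defs
begin

definition X2 :: "'a::comm_ring_1 poly" where "X2 = [:1,0,1:]"

definition Td :: "nat \<Rightarrow> 'a::comm_ring_1 poly \<Rightarrow> 'a poly" where
  "Td n g = (\<Sum>i\<le>n. smult (coeff g (n - i)) (monom 1 i * X2 ^ (n - i)))"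

definition cX :: "nat \<Rightarrow> nat \<Rightarrow> 'a::comm_ring_1" where
  "cX m t = (if even t then of_nat (m choose (t div 2)) else 0)"

lemma X2_mult: "coeff (X2 * q) t = coeff q t + (if t \<ge> 2 then coeff q (t - 2) else 0)"
  by (cases t; cases "t - 1") (auto simp: X2_def mult_pCons_left coeff_pCons split: nat.splits)

lemma coeff_X2_pow: "coeff (X2 ^ m :: 'a::comm_ring_1 poly) t = cX m t"
proof (induction m arbitrary: t)
  case 0
  then show ?case by (auto simp: cX_def coeff_1 binomial_eq_0 elim!: evenE)
next
  case (Suc m)
  show ?case
  proof (cases "t \<ge> 2")
    case True
    then obtain s where s: "t = Suc (Suc s)" by (metis add_2_eq_Suc le_Suc_ex)
    show ?thesis using Suc
      by (auto simp: X2_mult s cX_def binomial_Suc_Suc)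
  next
    case False
    then have "t = 0 \<or> t = 1" by auto
    then show ?thesis using Suc by (auto simp: X2_mult cX_def)
  qed
qed

lemma coeff_Td: "coeff (Td n g) k = (\<Sum>i\<le>n. coeff g (n - i) * (if i \<le> k then cX (n - i) (k - i) else 0))"
  by (auto simp: Td_def coeff_sum coeff_monom_mult coeff_X2_pow intro!: sum.cong)

lemma cX_big: "2 * m < t \<Longrightarrow> cX m t = 0"
  by (auto simp: cX_def binomial_eq_0 elim!: evenE)

lemma cX_sym: "t \<le> 2 * m \<Longrightarrow> cX m (2 * m - t) = cX m t"
proof -
  assume t: "t \<le> 2 * m"
  show ?thesis
  proof (cases "even t")
    case True
    then obtain s where s: "t = 2 * s" by (auto elim!: evenE)
    have "2 * m - t = 2 * (m - s)" using s by auto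
    then show ?thesis using s t by (simp add: cX_def binomial_symmetric[of s m])
  next
    case False
    then have "odd (2 * m - t)" using t by auto
    then show ?thesis using False by (simp add: cX_def)
  qed
qed

lemma Td_sym: "k \<le> 2 * n \<Longrightarrow> coeff (Td n g) (2 * n - k) = coeff (Td n g) k"
  unfolding coeff_Td
proof (intro sum.cong refl)
  fix i assume k: "k \<le> 2 * n" and i: "i \<in> {..n}"
  have "(if i \<le> 2 * n - k then cX (n - i) (2 * n - k - i) else 0) =
        (if i \<le> k then cX (n - i) (k - i) else (0::'a))"
  proof (cases "i \<le> k")
    case True
    show ?thesis
    proof (cases "i \<le> 2 * n - k")
      case True2: True
      have "2 * n - k - i = 2 * (n - i) - (k - i)" using True True2 i by auto
      moreover have "k - i \<le> 2 * (n - i)" using True True2 i k by auto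
      ultimately show ?thesis using True True2 cX_sym[of "k - i" "n - i"] by simp
    next
      case False
      then show ?thesis using True i k by (auto intro!: cX_big)
    qed
  next
    case False
    then show ?thesis using i k by (auto intro!: cX_big)
  qed
  then show "coeff g (n - i) * (if i \<le> 2 * n - k then cX (n - i) (2 * n - k - i) else 0) =
         coeff g (n - i) * (if i \<le> k then cX (n - i) (k - i) else 0)" by simp
qed

lemma Td_high: "2 * n < k \<Longrightarrow> coeff (Td n g) k = 0"
  unfolding coeff_Td by (intro sum.neutral) (auto simp: cX_big)

lemma degree_Td: "degree (Td n g) \<le> 2 * n"
  by (rule degree_le) (auto intro: Td_high)

lemma coeff_Td_0: "coeff (Td n g) 0 = coeff g n"
proof -
  have "coeff (Td n g) 0 = (\<Sum>i\<le>n. if i = 0 then coeff g n else 0)"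
    unfolding coeff_Td by (intro sum.cong) (auto simp: cX_def)
  then show ?thesis by simp
qed

lemma coeff_Td_top: "coeff (Td n g) (2 * n) = coeff g n"
  using Td_sym[of 0 n g] coeff_Td_0 by simp

lemma degree_Td_eq: "coeff g n \<noteq> 0 \<Longrightarrow> degree (Td n g) = 2 * n"
  by (metis antisym coeff_Td_top degree_Td le_degree)

lemma lead_Td: "coeff g n \<noteq> 0 \<Longrightarrow> lead_coeff (Td n g) = coeff g n"
  by (simp add: degree_Td_eq coeff_Td_top)

lemma reflect_Td: "coeff g n \<noteq> 0 \<Longrightarrow> reflect_poly (Td n g) = Td n g"
  by (rule poly_eqI) (auto simp: coeff_reflect_poly degree_Td_eq Td_sym Td_high)


lemma Td_add: "Td n (p + q) = Td n p + Td n q"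
  by (simp add: Td_def smult_add_left sum.distrib)

lemma Td_diff: "Td n (p - q) = Td n p - Td n q"
  by (simp add: Td_def smult_diff_left sum_subtractf)

lemma smult_sum_right: "smult a (\<Sum>i\<in>A. f i) = (\<Sum>i\<in>A. smult a (f i))"
  by (induction A rule: infinite_finite_induct) (simp_all add: smult_add_right)

lemma Td_smult: "Td n (smult a p) = smult a (Td n p)"
  by (simp add: Td_def smult_sum_right)

lemma Td_const0: "Td 0 [:a:] = [:a:]"
  by (simp add: Td_def)

lemma Td_x: "degree g \<le> n \<Longrightarrow> Td (Suc n) g = monom 1 1 * Td n g"
proof -
  assume d: "degree g \<le> n"
  have "Td (Suc n) g = smult (coeff g (Suc n)) (monom 1 0 * X2 ^ Suc n) +
      (\<Sum>i\<le>n. smult (coeff g (Suc n - Suc i)) (monom 1 (Suc i) * X2 ^ (Suc n - Suc i)))"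
    unfolding Td_def sum.atMost_Suc_shift by simp
  also have "coeff g (Suc n) = 0" using d by (simp add: coeff_eq_0)
  also have "(\<Sum>i\<le>n. smult (coeff g (Suc n - Suc i)) (monom 1 (Suc i) * X2 ^ (Suc n - Suc i)))
     = (\<Sum>i\<le>n. monom 1 1 * smult (coeff g (n - i)) (monom 1 i * X2 ^ (n - i)))"
    by (intro sum.cong refl) (simp add: mult.assoc[symmetric] mult_monom)
  finally show ?thesis by (simp add: Td_def sum_distrib_left)
qed

lemma Td_shift: "Td (Suc n) (pCons 0 g) = X2 * Td n g"
proof -
  have "Td (Suc n) (pCons 0 g) = (\<Sum>i\<le>n. smult (coeff (pCons 0 g) (Suc n - i)) (monom 1 i * X2 ^ (Suc n - i)))
     + smult (coeff (pCons 0 g) 0) (monom 1 (Suc n) * X2 ^ 0)"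
    unfolding Td_def by simp
  also have "(\<Sum>i\<le>n. smult (coeff (pCons 0 g) (Suc n - i)) (monom 1 i * X2 ^ (Suc n - i)))
      = (\<Sum>i\<le>n. X2 * smult (coeff g (n - i)) (monom 1 i * X2 ^ (n - i)))"
    by (intro sum.cong refl) (auto simp: Suc_diff_le mult_ac)
  finally show ?thesis by (simp add: Td_def sum_distrib_left)
qed

lemma Td_monom_shift: "degree g \<le> n \<Longrightarrow> Td (n + k) g = monom 1 k * Td n g"
proof (induction k)
  case 0
  then show ?case by simp
next
  case (Suc k)
  then have "Td (n + Suc k) g = monom 1 1 * Td (n + k) g" using Td_x[of g "n + k"] by simp
  also have "\<dots> = monom 1 (Suc k) * Td n g" using Suc by (simp add: mult.assoc[symmetric] mult_monom)
  finally show ?case .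
qed

lemma Td_mult: "degree g \<le> m \<Longrightarrow> degree h \<le> n \<Longrightarrow> Td (m + n) (g * h) = Td m g * Td n h"
proof (induction g arbitrary: m rule: pCons_induct)
  case 0
  then show ?case by (simp add: Td_def)
next
  case (pCons a g1)
  have split: "pCons a g1 = [:a:] + pCons 0 g1" by simp
  show ?case
  proof (cases m)
    case 0
    then have "g1 = 0" using pCons by (auto split: if_splits)
    then show ?thesis using 0 by (simp add: Td_smult Td_const0)
  next
    case (Suc m')
    have dg1: "degree g1 \<le> m'" using pCons Suc by (auto split: if_splits)
    have A: "Td m [:a:] = monom a m"
      using Td_monom_shift[of "[:a:]" 0 m] by (simp add: Td_const0 monom_altdef)
    have B: "Td (m + n) (smult a h) = monom a m * Td n h"
    proof -
      have "Td (m + n) (smult a h) = smult a (monom 1 m * Td n h)"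
        using Td_monom_shift[of h n m] pCons.prems by (simp add: Td_smult add.commute)
      then show ?thesis by (simp add: smult_monom mult_smult_left[symmetric])
    qed
    have "pCons a g1 * h = smult a h + pCons 0 (g1 * h)" by simp
    then have "Td (m + n) (pCons a g1 * h) = Td (m + n) (smult a h) + Td (Suc (m' + n)) (pCons 0 (g1 * h))"
      using Suc by (simp add: Td_add)
    also have "Td (Suc (m' + n)) (pCons 0 (g1 * h)) = X2 * Td (m' + n) (g1 * h)" by (rule Td_shift)
    also have "Td (m' + n) (g1 * h) = Td m' g1 * Td n h" using pCons.IH dg1 pCons.prems by blast
    finally have T1: "Td (m + n) (pCons a g1 * h) = Td (m + n) (smult a h) + X2 * (Td m' g1 * Td n h)" .
    have "Td m (pCons a g1) = Td m [:a:] + Td (Suc m') (pCons 0 g1)"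
      using Suc by (metis split Td_add)
    then have T2: "Td m (pCons a g1) = monom a m + X2 * Td m' g1" using A by (simp add: Td_shift)
    show ?thesis using T1 T2 B by (simp add: algebra_simps)
  qed
qed


lemma sum_rev_atMost: "(\<Sum>i\<le>(n::nat). f (n - i)) = (\<Sum>i\<le>n. f i)"
  by (rule sum.reindex_bij_witness[of _ "\<lambda>i. n - i" "\<lambda>i. n - i"]) auto

lemma Td_zero: "degree p \<le> n \<Longrightarrow> Td n p = 0 \<Longrightarrow> p = 0"
proof (rule ccontr)
  assume d: "degree p \<le> n" and z: "Td n p = 0" and nz: "p \<noteq> 0"
  have "Td n p = monom 1 (n - degree p) * Td (degree p) p"
    using Td_monom_shift[of p "degree p" "n - degree p"] d by simp
  moreover have "coeff (Td (degree p) p) 0 \<noteq> 0" using nz by (simp add: coeff_Td_0)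
  ultimately have "coeff (Td n p) (n - degree p) \<noteq> 0" by (simp add: coeff_monom_mult)
  then have "Td n p \<noteq> 0" by (metis coeff_0)
  then show False using z by simp
qed

lemma Td_inj: "degree p \<le> n \<Longrightarrow> degree q \<le> n \<Longrightarrow> Td n p = Td n q \<Longrightarrow> p = q"
proof -
  assume a: "degree p \<le> n" "degree q \<le> n" "Td n p = Td n q"
  have "Td n (p - q) = 0" using a(3) by (simp only: Td_diff) simp
  moreover have "degree (p - q) \<le> n" using a(1,2) by (meson degree_diff_le)
  ultimately show "p = q" using Td_zero[of "p - q" n] by simp
qed

definition psym :: "nat \<Rightarrow> 'a::zero poly \<Rightarrow> bool" where
  "psym d p \<longleftrightarrow> degree p \<le> d \<and> (\<forall>k\<le>d. coeff p k = coeff p (d - k))"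

lemma psym_Td: "psym (2 * n) (Td n g)"
  unfolding psym_def
proof (intro conjI allI impI)
  show "degree (Td n g) \<le> 2 * n" by (rule degree_Td)
  fix k assume "k \<le> 2 * n"
  then show "coeff (Td n g) k = coeff (Td n g) (2 * n - k)" by (rule Td_sym[symmetric])
qed

lemma psym_diff: "psym d p \<Longrightarrow> psym d q \<Longrightarrow> psym d (p - q :: 'a::comm_ring_1 poly)"
  unfolding psym_def
proof (elim conjE, intro conjI allI impI)
  assume "degree p \<le> d" "degree q \<le> d"
  then show "degree (p - q) \<le> d" by (meson degree_diff_le)
next
  fix k assume "\<forall>k\<le>d. coeff p k = coeff p (d - k)" "\<forall>k\<le>d. coeff q k = coeff q (d - k)" "k \<le> d"
  then have "coeff p k = coeff p (d - k)" "coeff q k = coeff q (d - k)" by blast+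
  then show "coeff (p - q) k = coeff (p - q) (d - k)" by (simp only: coeff_diff)
qed

lemma psym_smult: "psym d p \<Longrightarrow> psym d (smult c p :: 'a::comm_ring_1 poly)"
  unfolding psym_def
proof (elim conjE, intro conjI allI impI)
  assume "degree p \<le> d"
  then show "degree (smult c p) \<le> d" by (meson degree_smult_le order.trans)
next
  fix k assume "\<forall>k\<le>d. coeff p k = coeff p (d - k)" "k \<le> d"
  then have "coeff p k = coeff p (d - k)" by blast
  then show "coeff (smult c p) k = coeff (smult c p) (d - k)" by (simp only: coeff_smult)
qed

lemma psym_coeff: "psym d p \<Longrightarrow> k \<le> d \<Longrightarrow> coeff p k = coeff p (d - k)"
  unfolding psym_def by blast

lemma psym_deg: "psym d p \<Longrightarrow> degree p \<le> d"
  unfolding psym_def by blast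

lemma psym_peel:
  assumes "psym d p" "coeff p 0 = 0" "d \<ge> 2"
  shows "\<exists>r. p = pCons 0 r \<and> psym (d - 2) r"
proof -
  obtain a r where pr: "p = pCons a r" by (cases p rule: pCons_cases)
  then have a: "a = 0" using assms(2) by simp
  have cd: "coeff p d = 0" using psym_coeff[OF assms(1), of d] assms(2) by simp
  have "psym (d - 2) r"
    unfolding psym_def
  proof (intro conjI allI impI)
    show "degree r \<le> d - 2"
    proof (rule degree_le, intro allI impI)
      fix k assume k: "d - 2 < k"
      have "coeff p (Suc k) = 0"
      proof (cases "Suc k = d")
        case True
        then show ?thesis using cd by simp
      next
        case False
        then have "degree p < Suc k" using k psym_deg[OF assms(1)] assms(3) by linarith
        then show ?thesis by (rule coeff_eq_0)
      qed
      then show "coeff r k = 0" using pr by simp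
    qed
  next
    fix k assume k: "k \<le> d - 2"
    have "coeff p (Suc k) = coeff p (d - Suc k)" using psym_coeff[OF assms(1), of "Suc k"] k assms(3) by linarith
    moreover have "d - Suc k = Suc (d - 2 - k)" using k assms by auto
    ultimately show "coeff r k = coeff r (d - 2 - k)" using pr by simp
  qed
  then show ?thesis using pr a by blast
qed

lemma pCons0_monom: "pCons 0 r = monom 1 1 * (r :: 'a::comm_ring_1 poly)"
  by (simp add: monom_Suc monom_0)

lemma Td_exists: "psym (2 * n) p \<Longrightarrow> \<exists>g. degree g \<le> n \<and> Td n g = p"
proof (induction n arbitrary: p)
  case 0
  then have "degree p = 0" using psym_deg by fastforce
  then have "p = [:coeff p 0:]"
    by (intro poly_eqI) (auto simp: coeff_eq_0 coeff_pCons split: nat.splits)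
  then show ?case by (metis Td_const0 degree_pCons_0 le_refl)
next
  case (Suc n)
  define c where "c = coeff p 0"
  define r where "r = p - Td (Suc n) (monom c (Suc n))"
  have sr: "psym (2 * Suc n) r" unfolding r_def using Suc.prems psym_Td by (rule psym_diff)
  have "coeff r 0 = 0" by (simp add: r_def c_def coeff_Td_0)
  then obtain r' where r': "r = pCons 0 r'" "psym (2 * n) r'"
    using psym_peel[OF sr] by auto
  obtain g' where g': "degree g' \<le> n" "Td n g' = r'" using Suc.IH r'(2) by blast
  have "r = Td (Suc n) g'" using r' g' Td_x[of g' n] by (simp add: pCons0_monom)
  then have "p = Td (Suc n) (monom c (Suc n)) + Td (Suc n) g'" by (simp add: r_def diff_eq_eq)
  then have "p = Td (Suc n) (monom c (Suc n) + g')" by (simp add: Td_add)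
  moreover have "degree (monom c (Suc n) + g') \<le> Suc n"
    using g' by (intro degree_add_le) (auto simp: degree_monom_le intro: order.trans[OF degree_monom_le])
  ultimately show ?case by blast
qed

lemma psym_odd_root: "psym d p \<Longrightarrow> odd d \<Longrightarrow> poly p (-1) = (0::'a::comm_ring_1)"
proof (induction d arbitrary: p rule: less_induct)
  case (less d)
  define c where "c = coeff p 0"
  define q0 :: "'a poly" where "q0 = monom 1 d + 1"
  have d1: "d \<ge> 1" using less.prems by (cases d) auto
  have "degree q0 \<le> d" unfolding q0_def
    by (rule degree_add_le) (simp_all add: degree_monom_le)
  moreover have "coeff q0 k = coeff q0 (d - k)" if "k \<le> d" for k
    using d1 that by (auto simp: q0_def coeff_monom)
  ultimately have sq: "psym d q0" unfolding psym_def by blast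
  define r where "r = p - smult c q0"
  have sr: "psym d r" unfolding r_def using less.prems(1) by (intro psym_diff psym_smult sq)
  have r0: "coeff r 0 = 0" using d1 by (simp add: r_def c_def q0_def coeff_monom)
  have pq: "poly q0 (-1) = 0" using less.prems by (simp add: q0_def poly_monom neg_one_odd_power)
  have "poly r (-1) = 0"
  proof (cases "d = 1")
    case True
    have "coeff r 1 = 0" using psym_coeff[OF sr, of 1] r0 True by simp
    have "coeff r k = 0" for k
    proof -
      have "k = 0 \<or> k = 1 \<or> k > 1" by auto
      moreover have "k > 1 \<Longrightarrow> coeff r k = 0"
        using psym_deg[OF sr] True by (intro coeff_eq_0) simp
      ultimately show ?thesis using \<open>coeff r 1 = 0\<close> r0 by auto
    qed
    then have "r = 0" by (intro poly_eqI) simp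
    then show ?thesis by simp
  next
    case False
    then have "d \<ge> 2" using d1 by auto
    then obtain r' where "r = pCons 0 r'" "psym (d - 2) r'" using psym_peel[OF sr r0] by auto
    moreover have "poly r' (-1) = 0"
      using less.IH[of "d - 2" r'] calculation less.prems \<open>d \<ge> 2\<close> by auto
    ultimately show ?thesis by simp
  qed
  then show ?case by (simp add: r_def pq)
qed

lemma poly_Td:
  fixes x :: "'a::field"
  assumes "x \<noteq> 0" "degree g \<le> n"
  shows "poly (Td n g) x = x ^ n * poly g (x + inverse x)"
proof -
  have xy: "x * (x + inverse x) = 1 + x\<^sup>2" using assms(1) by (simp add: field_simps power2_eq_square)
  have "poly g (x + inverse x) = (\<Sum>i\<le>n. coeff g i * (x + inverse x) ^ i)"
    using poly_as_sum_of_monoms'[OF assms(2)]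
    by (metis (no_types, lifting) poly_monom poly_sum sum.cong)
  also have "\<dots> = (\<Sum>i\<le>n. coeff g (n - i) * (x + inverse x) ^ (n - i))"
    by (rule sum_rev_atMost[symmetric])
  finally have "x ^ n * poly g (x + inverse x) = (\<Sum>i\<le>n. x ^ n * (coeff g (n - i) * (x + inverse x) ^ (n - i)))"
    by (simp add: sum_distrib_left)
  also have "\<dots> = (\<Sum>i\<le>n. coeff g (n - i) * (x ^ i * (x ^ (n - i) * (x + inverse x) ^ (n - i))))"
  proof (intro sum.cong refl)
    fix i assume "i \<in> {..n}"
    then have "x ^ n = x ^ i * x ^ (n - i)" by (simp add: power_add[symmetric])
    then show "x ^ n * (coeff g (n - i) * (x + inverse x) ^ (n - i)) =
        coeff g (n - i) * (x ^ i * (x ^ (n - i) * (x + inverse x) ^ (n - i)))" by (simp add: mult_ac)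
  qed
  also have "\<dots> = (\<Sum>i\<le>n. coeff g (n - i) * (x ^ i * (1 + x\<^sup>2) ^ (n - i)))"
    by (simp add: power_mult_distrib[symmetric] xy)
  also have "\<dots> = poly (Td n g) x"
    by (simp add: Td_def poly_sum poly_monom X2_def power2_eq_square)
  finally show ?thesis by simp
qed


definition star :: "'a::field poly \<Rightarrow> 'a poly" where
  "star h = smult (inverse (coeff h 0)) (reflect_poly h)"

lemma irred_deg_pos: "irreducible (p :: 'a::field poly) \<Longrightarrow> degree p > 0"
  using is_unit_iff_degree[of p] by (auto simp: irreducible_def)

lemma irred_no_root:
  fixes p :: "'a::field poly"
  assumes "irreducible p" "degree p \<ge> 2"
  shows "poly p r \<noteq> 0"
proof
  assume "poly p r = 0"
  then obtain k where k: "p = [:-r,1:] * k" using poly_eq_0_iff_dvd by (metis dvdE)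
  have "p \<noteq> 0" using assms(1) by (auto simp: irreducible_def)
  then have "k \<noteq> 0" using k by auto
  have "\<not> is_unit [:-r, 1::'a:]" using is_unit_iff_degree[of "[:-r,1::'a:]"] by simp
  then have "is_unit k" using irreducibleD[OF assms(1) k] by blast
  then have "degree k = 0" using is_unit_iff_degree[OF \<open>k \<noteq> 0\<close>] by simp
  have "degree p = degree [:-r,1::'a:] + degree k"
    using k \<open>k \<noteq> 0\<close> degree_mult_eq[of "[:-r,1::'a:]" k] by simp
  then have "degree p = 1" using \<open>degree k = 0\<close> by simp
  then show False using assms(2) by simp
qed

lemma deg1_root:
  fixes p :: "'a::field poly"
  assumes "degree p = 1"
  shows "\<exists>r. poly p r = 0"
proof -
  have "p = [:coeff p 0, coeff p 1:]"
    using assms by (intro poly_eqI) (auto simp: coeff_pCons coeff_eq_0 split: nat.splits)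
  moreover have "p \<noteq> 0" using assms by auto
  then have "coeff p 1 \<noteq> 0" using assms leading_coeff_0_iff[of p] by simp
  ultimately have "poly p (- coeff p 0 / coeff p 1) = 0"
    by (metis (no_types, lifting) add.right_inverse mult.commute nonzero_eq_divide_eq add.right_neutral
        mult_zero_right poly_0 poly_pCons minus_divide_left)
  then show ?thesis by blast
qed

lemma irred_factor_exists:
  fixes a :: "'a::field poly"
  shows "degree a > 0 \<Longrightarrow> \<exists>h. irreducible h \<and> lead_coeff h = 1 \<and> h dvd a"
proof (induction "degree a" arbitrary: a rule: less_induct)
  case less
  have a0: "a \<noteq> 0" using less.prems by auto
  have nu: "\<not> is_unit a" using less.prems is_unit_iff_degree[OF a0] by simp
  show ?case
  proof (cases "irreducible a")
    case True
    define h where "h = smult (inverse (lead_coeff a)) a"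
    have "h = [:inverse (lead_coeff a):] * a" by (simp add: h_def)
    moreover have "is_unit [:inverse (lead_coeff a):]" using a0 by (simp add: is_unit_pCons_iff)
    ultimately have "irreducible h" using True irreducible_mult_unit_left by metis
    moreover have "lead_coeff h = 1" using a0 by (simp add: h_def)
    moreover have "h dvd a" using a0 by (simp add: h_def smult_dvd)
    ultimately show ?thesis by blast
  next
    case False
    then obtain b c where bc: "a = b * c" "\<not> is_unit b" "\<not> is_unit c"
      using a0 nu by (auto simp: irreducible_def)
    have b0: "b \<noteq> 0" "c \<noteq> 0" using bc a0 by auto
    have "degree b > 0" "degree c > 0" using bc b0 is_unit_iff_degree by auto
    then have "degree b < degree a" using bc b0 by (simp add: degree_mult_eq)
    then obtain h where "irreducible h" "lead_coeff h = 1" "h dvd b"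
      using less.hyps \<open>degree b > 0\<close> by blast
    then show ?thesis using bc by auto
  qed
qed

lemma monic_irred_dvd_eq:
  fixes h k :: "'a::field poly"
  assumes "irreducible h" "irreducible k" "lead_coeff h = 1" "lead_coeff k = 1" "k dvd h"
  shows "k = h"
proof -
  obtain u where u: "h = k * u" using assms(5) by (auto elim: dvdE)
  have "\<not> is_unit k" using assms(2) by (auto simp: irreducible_def)
  then have "is_unit u" using irreducibleD[OF assms(1) u] by blast
  have "h \<noteq> 0" using assms(3) by auto
  then have "u \<noteq> 0" using u by auto
  then have "degree u = 0" using \<open>is_unit u\<close> is_unit_iff_degree by blast
  then have uc: "u = [:coeff u 0:]"
    by (intro poly_eqI) (auto simp: coeff_pCons coeff_eq_0 split: nat.splits)
  have "lead_coeff h = lead_coeff k * lead_coeff u" using u by (simp add: lead_coeff_mult)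
  then have "coeff u 0 = 1" using assms(3,4) \<open>degree u = 0\<close> by simp
  then show ?thesis using u uc by (simp add: one_pCons[symmetric])
qed


lemma reflect_psym: "reflect_poly p = p \<Longrightarrow> psym (degree p) p"
  unfolding psym_def
proof (intro conjI allI impI)
  fix k assume r: "reflect_poly p = p" and k: "k \<le> degree p"
  have "coeff (reflect_poly p) k = coeff p (degree p - k)" using k by (simp add: coeff_reflect_poly)
  then show "coeff p k = coeff p (degree p - k)" using r by simp
qed simp

lemma psym_reflect: "psym (degree p) p \<Longrightarrow> reflect_poly p = p"
proof (rule poly_eqI)
  fix k assume s: "psym (degree p) p"
  show "coeff (reflect_poly p) k = coeff p k"
  proof (cases "k > degree p")
    case True
    then show ?thesis by (simp add: coeff_reflect_poly coeff_eq_0)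
  next
    case False
    then have "coeff p k = coeff p (degree p - k)" using psym_coeff[OF s, of k] by simp
    then show ?thesis using False by (simp add: coeff_reflect_poly)
  qed
qed

lemma irred_coeff0:
  fixes p :: "'a::field poly"
  shows "irreducible p \<Longrightarrow> degree p \<ge> 2 \<Longrightarrow> coeff p 0 \<noteq> 0"
  using irred_no_root[of p 0] by (simp add: poly_0_coeff_0)

lemma star_deg: "coeff h 0 \<noteq> 0 \<Longrightarrow> degree (star h) = degree h"
  by (simp add: star_def)

lemma star_lead: "coeff h 0 \<noteq> 0 \<Longrightarrow> lead_coeff (star h) = 1"
  by (simp add: star_def coeff_reflect_poly)

lemma star_coeff0: "lead_coeff h = 1 \<Longrightarrow> coeff (star h) 0 = inverse (coeff h 0)"
  by (simp add: star_def)

lemma star_star: "coeff h 0 \<noteq> 0 \<Longrightarrow> lead_coeff h = 1 \<Longrightarrow> star (star h) = h"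
  by (simp add: star_def reflect_poly_smult)

lemma star_reflect_self: "reflect_poly h = h \<Longrightarrow> lead_coeff h = 1 \<Longrightarrow> star h = h"
proof -
  assume r: "reflect_poly h = h" and l: "lead_coeff h = 1"
  have "coeff h 0 = 1" using coeff_0_reflect_poly[of h] r l by simp
  then show "star h = h" using r by (simp add: star_def)
qed

lemma reflect_irred:
  fixes h :: "'a::field poly"
  assumes "irreducible h" "coeff h 0 \<noteq> 0"
  shows "irreducible (reflect_poly h)"
proof (rule irreducibleI)
  have h0: "h \<noteq> 0" using assms(1) by (auto simp: irreducible_def)
  show "reflect_poly h \<noteq> 0" using h0 by simp
  show "\<not> is_unit (reflect_poly h)"
    using irred_deg_pos[OF assms(1)] is_unit_iff_degree[of "reflect_poly h"] h0 assms(2) by simp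
  fix a b assume ab: "reflect_poly h = a * b"
  have "a \<noteq> 0" "b \<noteq> 0" using ab h0 by auto
  have "coeff a 0 * coeff b 0 = lead_coeff h" using ab coeff_0_reflect_poly[of h] by (simp add: coeff_mult)
  then have a0: "coeff a 0 \<noteq> 0" and b0: "coeff b 0 \<noteq> 0" using h0 by auto
  have "h = reflect_poly a * reflect_poly b"
    using ab assms(2) by (metis reflect_poly_mult reflect_poly_reflect_poly)
  then have "is_unit (reflect_poly a) \<or> is_unit (reflect_poly b)" using irreducibleD[OF assms(1)] by blast
  then show "is_unit a \<or> is_unit b"
    using a0 b0 \<open>a \<noteq> 0\<close> \<open>b \<noteq> 0\<close> is_unit_iff_degree by (metis degree_reflect_poly_eq reflect_poly_eq_0_iff)
qed

lemma star_irred: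
  fixes h :: "'a::field poly"
  assumes "irreducible h" "coeff h 0 \<noteq> 0"
  shows "irreducible (star h)"
proof -
  have "star h = [:inverse (coeff h 0):] * reflect_poly h" by (simp add: star_def)
  moreover have "is_unit [:inverse (coeff h 0):]" using assms(2) by (simp add: is_unit_pCons_iff)
  ultimately show ?thesis using reflect_irred[OF assms] irreducible_mult_unit_left by metis
qed

lemma star_dvd:
  fixes h f :: "'a::field poly"
  assumes "h dvd f" "reflect_poly f = f" "coeff h 0 \<noteq> 0"
  shows "star h dvd f"
proof -
  obtain k where "f = h * k" using assms(1) by (auto elim: dvdE)
  then have "f = reflect_poly h * reflect_poly k" using assms(2) by (metis reflect_poly_mult)
  then have "reflect_poly h dvd f" by simp
  then show ?thesis using assms(3) by (simp add: star_def smult_dvd)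
qed

lemma reflect_h_star:
  fixes h :: "'a::field poly"
  assumes "coeff h 0 \<noteq> 0"
  shows "reflect_poly (h * star h) = h * star h"
  using assms by (simp add: star_def reflect_poly_mult reflect_poly_smult mult.commute)

lemma sri:
  fixes h :: "'a::field poly"
  assumes irr: "irreducible h" and l: "lead_coeff h = 1" and d: "degree h \<ge> 2" and st: "star h = h"
  shows "reflect_poly h = h \<and> even (degree h)"
proof -
  define c where "c = coeff h 0"
  have c0: "c \<noteq> 0" using irred_coeff0[OF irr d] by (simp add: c_def)
  have r: "reflect_poly h = smult c h"
    using st c0 unfolding star_def c_def by (metis smult_smult right_inverse smult_1_left)
  have "h = reflect_poly (reflect_poly h)" using c0 by (simp add: c_def)
  also have "\<dots> = smult (c * c) h" using r by (simp add: reflect_poly_smult)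
  finally have "lead_coeff h = lead_coeff (smult (c * c) h)" by simp
  then have cc: "c * c = 1" using l c0 by simp
  have "c = 1"
  proof (rule ccontr)
    assume "c \<noteq> 1"
    have "(c - 1) * (c + 1) = 0" using cc by (simp add: algebra_simps)
    then have cm: "c = -1" using \<open>c \<noteq> 1\<close> by (simp add: eq_neg_iff_add_eq_0)
    then have "(1::'a) \<noteq> -1" using \<open>c \<noteq> 1\<close> by simp
    have "poly (reflect_poly h) 1 = poly h 1" by (simp add: poly_reflect_poly_nz)
    then have "poly h 1 = - poly h 1" using r cm by simp
    then have "(1 + 1) * poly h 1 = 0" by (simp add: algebra_simps)
    moreover have "(1 + 1 :: 'a) \<noteq> 0" using \<open>(1::'a) \<noteq> -1\<close> by (simp add: eq_neg_iff_add_eq_0)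
    ultimately have "poly h 1 = 0" by simp
    then show False using irred_no_root[OF irr d] by blast
  qed
  then have rh: "reflect_poly h = h" using r by simp
  have "even (degree h)"
  proof (rule ccontr)
    assume "odd (degree h)"
    then have "poly h (-1) = 0" using psym_odd_root[OF reflect_psym[OF rh]] by blast
    then show False using irred_no_root[OF irr d] by blast
  qed
  then show ?thesis using rh by blast
qed


lemma deg0_monic: "degree (k :: 'a::field poly) = 0 \<Longrightarrow> lead_coeff k = 1 \<Longrightarrow> k = 1"
proof -
  assume d: "degree k = 0" and l: "lead_coeff k = 1"
  have "k = [:coeff k 0:]"
    using d by (intro poly_eqI) (auto simp: coeff_pCons coeff_eq_0 split: nat.splits)
  then show "k = 1" using d l by (simp add: one_pCons)
qed

lemma Td_of_reflect:
  fixes q :: "'a::field poly"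
  assumes "reflect_poly q = q" "q \<noteq> 0" "degree q = 2 * e"
  shows "\<exists>g. degree g = e \<and> lead_coeff g = lead_coeff q \<and> Td e g = q"
proof -
  have "psym (2 * e) q" using reflect_psym[OF assms(1)] assms(3) by simp
  then obtain g where g: "degree g \<le> e" "Td e g = q" using Td_exists by blast
  have "coeff g e = coeff q 0" using g coeff_Td_0[of e g] by simp
  also have "\<dots> = lead_coeff q" using coeff_0_reflect_poly[of q] assms(1) by simp
  finally have ce: "coeff g e = lead_coeff q" .
  then have "coeff g e \<noteq> 0" using assms(2) by simp
  then have "degree g = e" using g(1) le_degree by (metis antisym)
  then show ?thesis using ce g by auto
qed

lemma L_sub:
  fixes g q :: "'a::field poly"
  assumes irr: "irreducible g" and lg: "lead_coeff g = 1" and dg: "degree g = n"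
    and dv: "q dvd Td n g" and lq: "lead_coeff q = 1" and rq: "reflect_poly q = q"
    and ev: "even (degree q)" and dq: "degree q > 0"
  shows "q = Td n g"
proof -
  define f where "f = Td n g"
  have cgn: "coeff g n = 1" using lg dg by simp
  have lf: "lead_coeff f = 1" and df: "degree f = 2 * n" and rf: "reflect_poly f = f"
    using cgn by (simp_all add: f_def lead_Td degree_Td_eq reflect_Td coeff_Td_top)
  have f0: "f \<noteq> 0" using lf by auto
  obtain k where fk: "f = q * k" using dv by (auto simp: f_def elim: dvdE)
  have q0: "q \<noteq> 0" and k0: "k \<noteq> 0" using fk f0 by auto
  have "q * reflect_poly k = q * k" using rf fk rq by (metis reflect_poly_mult)
  then have rk: "reflect_poly k = k" using q0 by simp
  obtain e where e: "degree q = 2 * e" using ev by (auto elim: evenE)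
  obtain g1 where g1: "degree g1 = e" "lead_coeff g1 = 1" "Td e g1 = q"
    using Td_of_reflect[OF rq q0 e] lq by auto
  have "degree f = degree q + degree k" using fk q0 k0 by (simp add: degree_mult_eq)
  then have dk: "degree k = 2 * (n - e)" and en: "e \<le> n" using df e by auto
  obtain g2 where g2: "degree g2 = n - e" "lead_coeff g2 = lead_coeff k" "Td (n - e) g2 = k"
    using Td_of_reflect[OF rk k0 dk] by auto
  have "Td n (g1 * g2) = Td e g1 * Td (n - e) g2"
    using Td_mult[of g1 e g2 "n - e"] g1 g2 en by simp
  also have "\<dots> = Td n g" using g1 g2 fk by (simp add: f_def)
  finally have "g = g1 * g2"
    using Td_inj[of g n "g1 * g2"] dg g1 g2 en degree_mult_le[of g1 g2] by simp
  then have "is_unit g1 \<or> is_unit g2" using irreducibleD[OF irr] by blast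
  moreover have "g1 \<noteq> 0" "g2 \<noteq> 0" using g1 g2 k0 by auto
  moreover have "\<not> is_unit g1" using g1 e dq is_unit_iff_degree[OF \<open>g1 \<noteq> 0\<close>] by simp
  ultimately have "degree g2 = 0" using is_unit_iff_degree by blast
  then have "degree k = 0" using dk g2 by simp
  moreover have "lead_coeff k = 1" using lf fk lq by (simp add: lead_coeff_mult)
  ultimately have "k = 1" by (rule deg0_monic)
  then show ?thesis using fk by (simp add: f_def)
qed

lemma HS:
  fixes h A :: "'a::field poly"
  assumes irr: "irreducible h" and l: "lead_coeff h = 1" and d: "degree h \<ge> 2"
    and st: "star h \<noteq> h" and dv: "h dvd A" and rA: "reflect_poly A = A"
  shows "h * star h dvd A"
proof -
  have c0: "coeff h 0 \<noteq> 0" using irred_coeff0[OF irr d] .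
  obtain k where k: "A = h * k" using dv by (auto elim: dvdE)
  have sd: "star h dvd h * k" using star_dvd[OF dv rA c0] k by simp
  have si: "irreducible (star h)" using star_irred[OF irr c0] .
  have "prime_elem (star h)" using field_poly_irreducible_imp_prime[OF si] .
  then have "star h dvd h \<or> star h dvd k" using sd prime_elem_dvd_mult_iff by blast
  moreover have "\<not> star h dvd h"
    using monic_irred_dvd_eq[OF irr si l star_lead[OF c0]] st by blast
  ultimately have "star h dvd k" by blast
  then show ?thesis using k by simp
qed

lemma Td_no_root:
  fixes g :: "'a::field poly"
  assumes irr: "irreducible g" and lg: "lead_coeff g = 1" and dg: "degree g = n" and n2: "n \<ge> 2"
  shows "poly (Td n g) r \<noteq> 0"
proof
  assume z: "poly (Td n g) r = 0"
  have "poly (Td n g) 0 = 1" using lg dg by (simp add: poly_0_coeff_0 coeff_Td_0)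
  then have "r \<noteq> 0" using z by auto
  then have "r ^ n * poly g (r + inverse r) = 0" using poly_Td[of r g n] z dg by simp
  then have "poly g (r + inverse r) = 0" using \<open>r \<noteq> 0\<close> by simp
  then show False using irred_no_root[OF irr] dg n2 by auto
qed

lemma main_A:
  fixes g :: "'a::field poly"
  assumes irr: "irreducible g" and lg: "lead_coeff g = 1" and dg: "degree g = n" and n2: "n \<ge> 2"
  shows "irreducible (Td n g) \<or>
    (\<exists>h. irreducible h \<and> lead_coeff h = 1 \<and> degree h = n \<and> star h \<noteq> h \<and> Td n g = h * star h)"
proof (cases "irreducible (Td n g)")
  case True
  then show ?thesis by blast
next
  case ni: False
  define f where "f = Td n g"
  have cgn: "coeff g n = 1" using lg dg by simp
  have lf: "lead_coeff f = 1" and df: "degree f = 2 * n" and rf: "reflect_poly f = f"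
    using cgn by (simp_all add: f_def lead_Td degree_Td_eq reflect_Td coeff_Td_top)
  have f0: "f \<noteq> 0" using lf by auto
  have nu: "\<not> is_unit f" using is_unit_iff_degree[OF f0] df n2 by simp
  obtain a b where ab: "f = a * b" "\<not> is_unit a" "\<not> is_unit b"
    using ni f0 nu by (auto simp: irreducible_def f_def)
  have a0: "a \<noteq> 0" "b \<noteq> 0" using ab f0 by auto
  have "degree a > 0" "degree b > 0" using ab a0 is_unit_iff_degree by auto
  have "degree f = degree a + degree b" using ab a0 by (simp add: degree_mult_eq)
  then have da: "degree a < 2 * n" using df \<open>degree b > 0\<close> by simp
  obtain h where h: "irreducible h" "lead_coeff h = 1" "h dvd a"
    using irred_factor_exists[OF \<open>degree a > 0\<close>] by blast
  have dh: "degree h < 2 * n" using dvd_imp_degree_le[OF h(3) a0(1)] da by simp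
  have hf: "h dvd f" using h(3) ab by simp
  have dh2: "degree h \<ge> 2"
  proof (rule ccontr)
    assume "\<not> degree h \<ge> 2"
    then have "degree h = 1" using irred_deg_pos[OF h(1)] by simp
    then obtain r where "poly h r = 0" using deg1_root by blast
    then have "poly f r = 0" using hf by (auto elim!: dvdE)
    then show False using Td_no_root[OF irr lg dg n2] by (simp add: f_def)
  qed
  have c0: "coeff h 0 \<noteq> 0" using irred_coeff0[OF h(1) dh2] .
  have "\<exists>h. irreducible h \<and> lead_coeff h = 1 \<and> degree h = n \<and> star h \<noteq> h \<and> Td n g = h * star h"
  proof (cases "star h = h")
    case True
    then have "reflect_poly h = h \<and> even (degree h)" using sri[OF h(1,2) dh2] by blast
    then have "h = f" using L_sub[OF irr lg dg, of h] hf h(2) dh2 by (simp add: f_def)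
    then show ?thesis using dh df by simp
  next
    case False
    define q where "q = h * star h"
    have qf: "q dvd f" using HS[OF h(1,2) dh2 False hf rf] by (simp add: q_def)
    have lq: "lead_coeff q = 1" using h(2) star_lead[OF c0] by (simp add: q_def lead_coeff_mult)
    have rq: "reflect_poly q = q" using reflect_h_star[OF c0] by (simp add: q_def)
    have s0: "star h \<noteq> 0" using star_lead[OF c0] by auto
    have h0: "h \<noteq> 0" using h(2) by auto
    have dq: "degree q = 2 * degree h" using star_deg[OF c0] s0 h0 by (simp add: q_def degree_mult_eq)
    have "q = f" using L_sub[OF irr lg dg, of q] qf lq rq dq dh2 by (simp add: f_def)
    then have "degree h = n" using dq df by simp
    then show ?thesis using h False \<open>q = f\<close> by (auto simp: q_def f_def)
  qed
  then show ?thesis by blast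
qed


lemma Td_nz: "coeff g n \<noteq> 0 \<Longrightarrow> Td n g \<noteq> 0"
proof
  assume "coeff g n \<noteq> 0" "Td n g = 0"
  then show False using coeff_Td_0[of n g] by simp
qed

lemma Td_split:
  fixes a b :: "'a::field poly"
  assumes "a \<noteq> 0" "b \<noteq> 0" "degree (a * b) = n"
  shows "Td n (a * b) = Td (degree a) a * Td (degree b) b"
  using Td_mult[of a "degree a" b "degree b"] assms by (simp add: degree_mult_eq)

lemma B1:
  fixes f :: "'a::field poly"
  assumes irr: "irreducible f" and lf: "lead_coeff f = 1" and df: "degree f = 2 * n" and rf: "reflect_poly f = f"
  shows "\<exists>g. irreducible g \<and> lead_coeff g = 1 \<and> degree g = n \<and> Td n g = f"
proof -
  have f0: "f \<noteq> 0" using lf by auto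
  obtain g where g: "degree g = n" "lead_coeff g = 1" "Td n g = f"
    using Td_of_reflect[OF rf f0 df] lf by auto
  have g0: "g \<noteq> 0" using g by auto
  have "n > 0" using irred_deg_pos[OF irr] df by simp
  have "irreducible g"
  proof (rule irreducibleI)
    show "g \<noteq> 0" by fact
    show "\<not> is_unit g" using is_unit_iff_degree[OF g0] g \<open>n > 0\<close> by simp
    fix a b assume ab: "g = a * b"
    have a0: "a \<noteq> 0" "b \<noteq> 0" using ab g0 by auto
    have fab: "f = Td n (a * b)" using g(3) ab by simp
    have "degree (a * b) = n" using ab g(1) by simp
    then have "f = Td (degree a) a * Td (degree b) b" using Td_split[OF a0] fab by simp
    then have "is_unit (Td (degree a) a) \<or> is_unit (Td (degree b) b)" using irreducibleD[OF irr] by metis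
    moreover have "Td (degree a) a \<noteq> 0" "Td (degree b) b \<noteq> 0"
      using a0 by (simp_all add: Td_nz)
    ultimately have "degree (Td (degree a) a) = 0 \<or> degree (Td (degree b) b) = 0"
      using is_unit_iff_degree by metis
    then have "degree a = 0 \<or> degree b = 0" using a0 by (simp add: degree_Td_eq)
    then show "is_unit a \<or> is_unit b" using a0 is_unit_iff_degree by metis
  qed
  then show ?thesis using g by blast
qed

lemma B2:
  fixes h :: "'a::field poly"
  assumes irr: "irreducible h" and lh: "lead_coeff h = 1" and dh: "degree h = n" and n2: "n \<ge> 2"
    and st: "star h \<noteq> h"
  shows "\<exists>g. irreducible g \<and> lead_coeff g = 1 \<and> degree g = n \<and> Td n g = h * star h"
proof -
  have d2: "degree h \<ge> 2" using dh n2 by simp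
  have c0: "coeff h 0 \<noteq> 0" using irred_coeff0[OF irr d2] .
  define q where "q = h * star h"
  have lq: "lead_coeff q = 1" using lh star_lead[OF c0] by (simp add: q_def lead_coeff_mult)
  have rq: "reflect_poly q = q" using reflect_h_star[OF c0] by (simp add: q_def)
  have s0: "star h \<noteq> 0" using star_lead[OF c0] by auto
  have h0: "h \<noteq> 0" using lh by auto
  have dq: "degree q = 2 * n" using star_deg[OF c0] s0 h0 dh by (simp add: q_def degree_mult_eq)
  have q0: "q \<noteq> 0" using lq by auto
  obtain g where g: "degree g = n" "lead_coeff g = 1" "Td n g = q"
    using Td_of_reflect[OF rq q0 dq] lq by auto
  have g0: "g \<noteq> 0" using g by auto
  have "irreducible g"
  proof (rule irreducibleI)
    show "g \<noteq> 0" by fact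
    show "\<not> is_unit g" using is_unit_iff_degree[OF g0] g n2 by simp
    fix a b assume ab: "g = a * b"
    have a0: "a \<noteq> 0" "b \<noteq> 0" using ab g0 by auto
    have ca: "coeff a (degree a) \<noteq> 0" "coeff b (degree b) \<noteq> 0" using a0 by auto
    have fab: "q = Td n (a * b)" using g(3) ab by simp
    have "degree (a * b) = n" using ab g(1) by simp
    then have qAB: "q = Td (degree a) a * Td (degree b) b" using Td_split[OF a0] fab by simp
    have dab: "degree a + degree b = n" using \<open>degree (a * b) = n\<close> a0 by (simp add: degree_mult_eq)
    have rA: "reflect_poly (Td (degree a) a) = Td (degree a) a" using reflect_Td[OF ca(1)] .
    have rB: "reflect_poly (Td (degree b) b) = Td (degree b) b" using reflect_Td[OF ca(2)] .
    have A0: "Td (degree a) a \<noteq> 0" "Td (degree b) b \<noteq> 0"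
      using ca by (simp_all add: Td_nz)
    have "prime_elem h" using field_poly_irreducible_imp_prime[OF irr] .
    moreover have "h dvd Td (degree a) a * Td (degree b) b" using qAB unfolding q_def by (metis dvd_triv_left)
    ultimately have "h dvd Td (degree a) a \<or> h dvd Td (degree b) b" using prime_elem_dvd_mult_iff by blast
    then have "degree a = 0 \<or> degree b = 0"
    proof
      assume "h dvd Td (degree a) a"
      then have "q dvd Td (degree a) a" using HS[OF irr lh d2 st _ rA] by (simp add: q_def)
      then have "degree q \<le> 2 * degree a" using dvd_imp_degree_le[OF _ A0(1)] degree_Td_eq[OF ca(1)] by simp
      then show ?thesis using dq dab by simp
    next
      assume "h dvd Td (degree b) b"
      then have "q dvd Td (degree b) b" using HS[OF irr lh d2 st _ rB] by (simp add: q_def)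
      then have "degree q \<le> 2 * degree b" using dvd_imp_degree_le[OF _ A0(2)] degree_Td_eq[OF ca(2)] by simp
      then show ?thesis using dq dab by simp
    qed
    then show "is_unit a \<or> is_unit b" using a0 is_unit_iff_degree by metis
  qed
  then show ?thesis using g by (auto simp: q_def)
qed

lemma fibre:
  fixes h k :: "'a::field poly"
  assumes "irreducible h" "lead_coeff h = 1" "degree h \<ge> 2"
    and "irreducible k" "lead_coeff k = 1" "k dvd h * star h"
  shows "k = h \<or> k = star h"
proof -
  have c0: "coeff h 0 \<noteq> 0" using irred_coeff0[OF assms(1,3)] .
  have "prime_elem k" using field_poly_irreducible_imp_prime[OF assms(4)] .
  then have "k dvd h \<or> k dvd star h" using assms(6) prime_elem_dvd_mult_iff by blast
  then show ?thesis
    using monic_irred_dvd_eq[OF assms(1,4,2,5)] monic_irred_dvd_eq[OF star_irred[OF assms(1) c0] assms(4) star_lead[OF c0] assms(5)]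
    by blast
qed


section \<open>Vectors\<close>

definition topv :: "nat \<Rightarrow> nat \<Rightarrow> 'a::zero poly \<Rightarrow> 'a list" where
  "topv l d f = map (\<lambda>j. topc f d j) [1..<Suc l]"

definition lowv :: "nat \<Rightarrow> 'a::zero poly \<Rightarrow> 'a list" where
  "lowv l f = map (coeff f) [0..<l]"

lemma length_topv [simp]: "length (topv l d f) = l"
  by (simp add: topv_def del: upt_Suc)

lemma length_lowv [simp]: "length (lowv l f) = l"
  by (simp add: lowv_def)

lemma nth_topv: "i < l \<Longrightarrow> topv l d f ! i = topc f d (Suc i)"
  by (simp add: topv_def del: upt_Suc)

lemma nth_lowv: "i < l \<Longrightarrow> lowv l f ! i = coeff f i"
  by (simp add: lowv_def)

lemma top_cond: "(\<forall>j\<in>{1..length a}. topc f d j = a ! (j - 1)) \<longleftrightarrow> topv (length a) d f = a"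
proof
  assume A: "\<forall>j\<in>{1..length a}. topc f d j = a ! (j - 1)"
  show "topv (length a) d f = a"
  proof (rule nth_equalityI)
    fix i assume "i < length (topv (length a) d f)"
    then have i: "i < length a" by simp
    then have "topc f d (Suc i) = a ! (Suc i - 1)" using A by auto
    then show "topv (length a) d f ! i = a ! i" using i by (simp add: nth_topv)
  qed simp
next
  assume B: "topv (length a) d f = a"
  show "\<forall>j\<in>{1..length a}. topc f d j = a ! (j - 1)"
  proof
    fix j assume j: "j \<in> {1..length a}"
    then have "j - 1 < length a" "Suc (j - 1) = j" by auto
    then have "topv (length a) d f ! (j - 1) = topc f d j" using nth_topv[of "j - 1" "length a" d f] by simp
    then show "topc f d j = a ! (j - 1)" using B by simp
  qed
qed

lemma low_cond: "(\<forall>j<length b. coeff f j = b ! j) \<longleftrightarrow> lowv (length b) f = b"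
proof
  assume A: "\<forall>j<length b. coeff f j = b ! j"
  show "lowv (length b) f = b"
    by (rule nth_equalityI) (simp_all add: nth_lowv A)
next
  assume B: "lowv (length b) f = b"
  show "\<forall>j<length b. coeff f j = b ! j"
  proof (intro allI impI)
    fix j assume "j < length b"
    then have "lowv (length b) f ! j = coeff f j" by (simp add: nth_lowv)
    then show "coeff f j = b ! j" using B by simp
  qed
qed

lemma ibinom_0 [simp]: "ibinom m 0 = 1"
  by (simp add: ibinom_def)

lemma length_phi [simp]: "length (phi n g) = length g"
  by (simp add: phi_def del: upt_Suc)

lemma nth_phi: "i < length g \<Longrightarrow> phi n g ! i =
   (\<Sum>j\<in>{0..Suc i div 2}. of_int (ibinom (int n + 2 * int j - int (Suc i)) j) *
        (if Suc i - 2 * j = 0 then 1 else g ! (Suc i - 2 * j - 1)))"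
proof -
  assume i: "i < length g"
  have u: "[1..<length g + 1] ! i = Suc i" using i by (simp del: upt_Suc)
  have l: "i < length [1..<length g + 1]" using i by (simp del: upt_Suc)
  show ?thesis unfolding phi_def nth_map[OF l] u by simp
qed

lemma length_psi [simp]: "length (psi b a) = length a"
  by (simp add: psi_def del: upt_Suc)

lemma nth_psi: "i < length a \<Longrightarrow> psi b a ! i =
   a ! i + inverse (b ! 0) * b ! Suc i + inverse (b ! 0) * (\<Sum>j\<in>{1..<Suc i}. a ! (j - 1) * b ! (Suc i - j))"
  by (simp add: psi_def del: upt_Suc)

lemma phi_inj:
  fixes g g' :: "'a::field list"
  assumes len: "length g = length g'" and eq: "phi n g = phi n g'"
  shows "g = g'"
proof (rule nth_equalityI)
  show "length g = length g'" by fact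
  fix i assume "i < length g"
  then show "g ! i = g' ! i"
  proof (induction i rule: less_induct)
    case (less i)
    define T where "T = (\<lambda>h::'a list. \<lambda>j. of_int (ibinom (int n + 2 * int j - int (Suc i)) j) *
        (if Suc i - 2 * j = 0 then (1::'a) else h ! (Suc i - 2 * j - 1)))"
    have "phi n g ! i = (\<Sum>j\<in>{0..Suc i div 2}. T g j)" using less.prems by (simp add: nth_phi T_def)
    also have "\<dots> = T g 0 + (\<Sum>j\<in>{Suc 0..Suc i div 2}. T g j)" by (rule sum.atLeast_Suc_atMost) simp
    finally have L: "phi n g ! i = g ! i + (\<Sum>j\<in>{Suc 0..Suc i div 2}. T g j)" by (simp add: T_def)
    have "phi n g' ! i = (\<Sum>j\<in>{0..Suc i div 2}. T g' j)" using less.prems len by (simp add: nth_phi T_def)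
    also have "\<dots> = T g' 0 + (\<Sum>j\<in>{Suc 0..Suc i div 2}. T g' j)" by (rule sum.atLeast_Suc_atMost) simp
    finally have R: "phi n g' ! i = g' ! i + (\<Sum>j\<in>{Suc 0..Suc i div 2}. T g' j)" by (simp add: T_def)
    have "(\<Sum>j\<in>{Suc 0..Suc i div 2}. T g j) = (\<Sum>j\<in>{Suc 0..Suc i div 2}. T g' j)"
    proof (rule sum.cong[OF refl])
      fix j assume j: "j \<in> {Suc 0..Suc i div 2}"
      show "T g j = T g' j"
      proof (cases "Suc i - 2 * j = 0")
        case False
        then have "Suc i - 2 * j - 1 < i" "Suc i - 2 * j - 1 < length g" using j less.prems by auto
        then have "g ! (Suc i - 2 * j - 1) = g' ! (Suc i - 2 * j - 1)" using less.IH by blast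
        then show ?thesis by (simp add: T_def)
      qed (simp add: T_def)
    qed
    then show ?case using L R eq by simp
  qed
qed

lemma psi_inj:
  fixes a a' b :: "'a::field list"
  assumes len: "length a = length a'" and eq: "psi b a = psi b a'"
  shows "a = a'"
proof (rule nth_equalityI)
  show "length a = length a'" by fact
  fix i assume "i < length a"
  then show "a ! i = a' ! i"
  proof (induction i rule: less_induct)
    case (less i)
    have "(\<Sum>j\<in>{1..<Suc i}. a ! (j - 1) * b ! (Suc i - j)) = (\<Sum>j\<in>{1..<Suc i}. a' ! (j - 1) * b ! (Suc i - j))"
    proof (rule sum.cong[OF refl])
      fix j assume j: "j \<in> {1..<Suc i}"
      then have "j - 1 < i" "j - 1 < length a" using less.prems by auto
      then show "a ! (j - 1) * b ! (Suc i - j) = a' ! (j - 1) * b ! (Suc i - j)" using less.IH by metis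
    qed
    moreover have "psi b a ! i = psi b a' ! i" using eq by simp
    ultimately show ?case using less.prems len by (simp add: nth_psi)
  qed
qed

lemma finite_lists_len: "finite {xs :: 'a::finite list. length xs = l}"
  using finite_lists_length_eq[of "UNIV :: 'a set" l] by simp

lemma inv_iff_gen:
  assumes "finite A" "inj_on f A" "f ` A \<subseteq> A" "a \<in> A" "c \<in> A"
  shows "a = inv_into A f c \<longleftrightarrow> f a = c"
proof -
  have im: "f ` A = A" using endo_inj_surj[OF assms(1,3,2)] .
  show ?thesis
  proof
    assume "a = inv_into A f c"
    then show "f a = c" using f_inv_into_f[of c f A] im assms(5) by simp
  next
    assume "f a = c"
    then show "a = inv_into A f c" using inv_into_f_f[OF assms(2,4)] by simp
  qed
qed

lemma inv_in_gen:
  assumes "finite A" "inj_on f A" "f ` A \<subseteq> A" "c \<in> A"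
  shows "inv_into A f c \<in> A"
proof -
  have im: "f ` A = A" using endo_inj_surj[OF assms(1,3,2)] .
  then show ?thesis using inv_into_into[of c f A] assms(4) by simp
qed

lemma inj_phi: "inj_on (phi n) {g :: 'a::field list. length g = l}"
  unfolding inj_on_def by (metis (mono_tags) mem_Collect_eq phi_inj)

lemma inj_psi: "inj_on (psi b) {g :: 'a::field list. length g = l}"
  unfolding inj_on_def by (metis (mono_tags) mem_Collect_eq psi_inj)

lemma phi_inv_iff:
  fixes a c :: "'a::{finite,field} list"
  assumes "length a = length c"
  shows "a = phi_inv n c \<longleftrightarrow> phi n a = c"
  unfolding phi_inv_def
  by (rule inv_iff_gen) (use assms inj_phi in \<open>auto simp: finite_lists_len\<close>)

lemma length_phi_inv:
  fixes c :: "'a::{finite,field} list"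
  shows "length (phi_inv n c) = length c"
proof -
  have "phi_inv n c \<in> {g. length g = length c}"
    unfolding phi_inv_def
    by (rule inv_in_gen) (use inj_phi in \<open>auto simp: finite_lists_len\<close>)
  then show ?thesis by simp
qed

lemma psi_inv_iff:
  fixes a b c :: "'a::{finite,field} list"
  assumes "length a = length c"
  shows "a = psi_inv b c \<longleftrightarrow> psi b a = c"
  unfolding psi_inv_def
  by (rule inv_iff_gen) (use assms inj_psi in \<open>auto simp: finite_lists_len\<close>)

lemma length_psi_inv:
  fixes b c :: "'a::{finite,field} list"
  shows "length (psi_inv b c) = length c"
proof -
  have "psi_inv b c \<in> {g. length g = length c}"
    unfolding psi_inv_def
    by (rule inv_in_gen) (use inj_psi in \<open>auto simp: finite_lists_len\<close>)
  then show ?thesis by simp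
qed


lemma topc_reflect: "degree p = d \<Longrightarrow> topc p d k = coeff (reflect_poly p) k"
  by (simp add: topc_def coeff_reflect_poly)

lemma coeff_Td_phi:
  "coeff (Td n g) k = (\<Sum>j\<in>{0..k div 2}. of_int (ibinom (int n + 2 * int j - int k) j) * topc g n (k - 2 * j))"
proof -
  define F where "F i = (if i \<le> n \<and> i \<le> k \<and> even (k - i)
      then coeff g (n - i) * of_nat ((n - i) choose ((k - i) div 2)) else 0)" for i
  have S1: "coeff (Td n g) k = (\<Sum>i\<le>n. F i)"
    unfolding coeff_Td
  proof (rule sum.cong[OF refl])
    fix i assume "i \<in> {..n}"
    then show "coeff g (n - i) * (if i \<le> k then cX (n - i) (k - i) else 0) = F i"
      by (auto simp: F_def cX_def)
  qed
  have S2: "(\<Sum>i\<le>n. F i) = (\<Sum>i\<le>n + k. F i)"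
    by (rule sum.mono_neutral_left) (auto simp: F_def)
  have S3: "(\<Sum>i\<le>k. F i) = (\<Sum>i\<le>n + k. F i)"
    by (rule sum.mono_neutral_left) (auto simp: F_def)
  have S4: "(\<Sum>j\<in>{0..k div 2}. of_int (ibinom (int n + 2 * int j - int k) j) * topc g n (k - 2 * j))
      = (\<Sum>j\<in>{0..k div 2}. F (k - 2 * j))"
  proof (rule sum.cong[OF refl])
    fix j assume "j \<in> {0..k div 2}"
    then have jk: "2 * j \<le> k" by auto
    define i where "i = k - 2 * j"
    have ki: "k - i = 2 * j" using jk by (simp add: i_def)
    have ik: "i \<le> k" by (simp add: i_def)
    show "of_int (ibinom (int n + 2 * int j - int k) j) * topc g n (k - 2 * j) = F (k - 2 * j)"
    proof (cases "i \<le> n")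
      case True
      have "int n + 2 * int j - int k = int (n - i)" using True jk by (simp add: i_def of_nat_diff)
      then have "ibinom (int n + 2 * int j - int k) j = int ((n - i) choose j)" by (simp add: ibinom_def)
      moreover have "topc g n (k - 2 * j) = coeff g (n - i)" using True by (simp add: topc_def i_def)
      moreover have "F (k - 2 * j) = coeff g (n - i) * of_nat ((n - i) choose j)"
        using True ki ik by (simp add: F_def i_def[symmetric])
      ultimately show ?thesis by simp
    next
      case False
      then show ?thesis by (simp add: topc_def F_def i_def)
    qed
  qed
  have inj: "inj_on (\<lambda>j. k - 2 * j) {0..k div 2}" unfolding inj_on_def by auto
  have S5: "(\<Sum>j\<in>{0..k div 2}. F (k - 2 * j)) = (\<Sum>i\<in>(\<lambda>j. k - 2 * j) ` {0..k div 2}. F i)"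
    using sum.reindex[OF inj, of F] by (simp add: comp_def)
  have S6: "(\<Sum>i\<in>(\<lambda>j. k - 2 * j) ` {0..k div 2}. F i) = (\<Sum>i\<le>k. F i)"
  proof (rule sum.mono_neutral_left)
    show "(\<lambda>j. k - 2 * j) ` {0..k div 2} \<subseteq> {..k}" by auto
    show "\<forall>i\<in>{..k} - (\<lambda>j. k - 2 * j) ` {0..k div 2}. F i = 0"
    proof
      fix i assume i: "i \<in> {..k} - (\<lambda>j. k - 2 * j) ` {0..k div 2}"
      show "F i = 0"
      proof (rule ccontr)
        assume "F i \<noteq> 0"
        then have ev: "even (k - i)" and ik: "i \<le> k" by (auto simp: F_def split: if_splits)
        then have "i = k - 2 * ((k - i) div 2)" "(k - i) div 2 \<in> {0..k div 2}" by (auto elim!: evenE)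
        then show False using i by blast
      qed
    qed
  qed simp
  show ?thesis using S1 S2 S3 S4 S5 S6 by simp
qed

lemma phi_top:
  fixes g :: "'a::field poly"
  assumes lg: "lead_coeff g = 1" and dg: "degree g = n"
  shows "phi n (topv l n g) = topv l (2 * n) (Td n g)"
proof (rule nth_equalityI)
  show "length (phi n (topv l n g)) = length (topv l (2 * n) (Td n g))" by simp
  fix i assume "i < length (phi n (topv l n g))"
  then have i: "i < l" by simp
  have cgn: "coeff g n = 1" using lg dg by simp
  have i': "i < length (topv l n g)" using i by simp
  have "phi n (topv l n g) ! i = (\<Sum>j\<in>{0..Suc i div 2}. of_int (ibinom (int n + 2 * int j - int (Suc i)) j) *
        topc g n (Suc i - 2 * j))"
    unfolding nth_phi[OF i']
  proof (rule sum.cong[OF refl])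
    fix j assume j: "j \<in> {0..Suc i div 2}"
    have "(if Suc i - 2 * j = 0 then 1 else topv l n g ! (Suc i - 2 * j - 1)) = topc g n (Suc i - 2 * j)"
    proof (cases "Suc i - 2 * j = 0")
      case True
      then show ?thesis using cgn by (simp add: topc_def)
    next
      case False
      then have "Suc i - 2 * j - 1 < l" "Suc (Suc i - 2 * j - 1) = Suc i - 2 * j" using i by auto
      then show ?thesis using False nth_topv[of "Suc i - 2 * j - 1" l n g] by simp
    qed
    then show "of_int (ibinom (int n + 2 * int j - int (Suc i)) j) *
        (if Suc i - 2 * j = 0 then 1 else topv l n g ! (Suc i - 2 * j - 1)) =
        of_int (ibinom (int n + 2 * int j - int (Suc i)) j) * topc g n (Suc i - 2 * j)" by simp
  qed
  also have "\<dots> = coeff (Td n g) (Suc i)" by (rule coeff_Td_phi[symmetric])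
  also have "\<dots> = topc (Td n g) (2 * n) (Suc i)"
    using cgn by (simp add: topc_reflect degree_Td_eq reflect_Td)
  also have "\<dots> = topv l (2 * n) (Td n g) ! i" using i by (simp add: nth_topv)
  finally show "phi n (topv l n g) ! i = topv l (2 * n) (Td n g) ! i" .
qed

lemma sum_split_ends: "1 \<le> (k::nat) \<Longrightarrow> (\<Sum>j\<le>k. f j) = f 0 + f k + (\<Sum>j\<in>{1..<k}. (f j :: 'a::comm_monoid_add))"
proof -
  assume k: "1 \<le> k"
  have "(\<Sum>j\<le>k. f j) = (\<Sum>j\<in>{0..k}. f j)" by (rule sum.cong) auto
  also have "\<dots> = f 0 + (\<Sum>j\<in>{Suc 0..k}. f j)" by (rule sum.atLeast_Suc_atMost) simp
  also have "(\<Sum>j\<in>{Suc 0..k}. f j) = f k + (\<Sum>j\<in>{Suc 0..<k}. f j)" using k by (intro sum.last_plus) simp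
  finally show ?thesis by (simp add: add.assoc)
qed

lemma psi_top:
  fixes h :: "'a::field poly"
  assumes lh: "lead_coeff h = 1" and dh: "degree h = n" and c0: "coeff h 0 \<noteq> 0"
  shows "psi (lowv (Suc l) h) (topv l n h) = topv l (2 * n) (h * star h)"
proof (rule nth_equalityI)
  show "length (psi (lowv (Suc l) h) (topv l n h)) = length (topv l (2 * n) (h * star h))" by simp
  fix i assume "i < length (psi (lowv (Suc l) h) (topv l n h))"
  then have i: "i < l" by simp
  define c where "c = inverse (coeff h 0)"
  define f where "f j = topc h n j * coeff h (Suc i - j)" for j
  have chn: "coeff h n = 1" using lh dh by simp
  have s0: "star h \<noteq> 0" using star_lead[OF c0] by auto
  have h0: "h \<noteq> 0" using lh by auto
  have dq: "degree (h * star h) = 2 * n" using star_deg[OF c0] s0 h0 dh by (simp add: degree_mult_eq)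
  have "topv l (2 * n) (h * star h) ! i = topc (h * star h) (2 * n) (Suc i)" using i by (simp add: nth_topv)
  also have "\<dots> = coeff (h * star h) (Suc i)" using dq reflect_h_star[OF c0] by (simp add: topc_reflect)
  also have "coeff (h * star h) (Suc i) = c * (\<Sum>j\<le>Suc i. f j)"
  proof -
    have "h * star h = smult c (reflect_poly h * h)" by (simp add: star_def c_def mult.commute)
    then show ?thesis by (simp add: coeff_mult f_def topc_reflect[OF dh])
  qed
  also have "(\<Sum>j\<le>Suc i. f j) = f 0 + f (Suc i) + (\<Sum>j\<in>{1..<Suc i}. f j)" by (rule sum_split_ends) simp
  finally have R: "topv l (2 * n) (h * star h) ! i = c * (f 0 + f (Suc i) + (\<Sum>j\<in>{1..<Suc i}. f j))" .
  have f0: "f 0 = coeff h (Suc i)" using chn by (simp add: f_def topc_def)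
  have fk: "f (Suc i) = topc h n (Suc i) * coeff h 0" by (simp add: f_def)
  have "psi (lowv (Suc l) h) (topv l n h) ! i = topc h n (Suc i) + c * coeff h (Suc i) +
      c * (\<Sum>j\<in>{1..<Suc i}. f j)"
  proof -
    have A: "(\<Sum>j\<in>{1..<Suc i}. topv l n h ! (j - 1) * lowv (Suc l) h ! (Suc i - j)) = (\<Sum>j\<in>{1..<Suc i}. f j)"
    proof (rule sum.cong[OF refl])
      fix j assume j: "j \<in> {1..<Suc i}"
      then have "j - 1 < l" "Suc (j - 1) = j" "Suc i - j < Suc l" using i by auto
      then show "topv l n h ! (j - 1) * lowv (Suc l) h ! (Suc i - j) = f j"
        using nth_topv[of "j - 1" l n h] nth_lowv[of "Suc i - j" "Suc l" h] by (simp add: f_def)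
    qed
    have B: "topv l n h ! i = topc h n (Suc i)" using i by (simp add: nth_topv)
    have C: "lowv (Suc l) h ! 0 = coeff h 0" "lowv (Suc l) h ! Suc i = coeff h (Suc i)"
      using i by (simp_all add: nth_lowv)
    show ?thesis using A B C i by (simp add: nth_psi c_def)
  qed
  also have "\<dots> = c * (f 0 + f (Suc i) + (\<Sum>j\<in>{1..<Suc i}. f j))"
    using f0 fk c0 by (simp add: c_def field_simps)
  finally show "psi (lowv (Suc l) h) (topv l n h) ! i = topv l (2 * n) (h * star h) ! i" using R by simp
qed


lemma finite_deg_le: "finite {f :: 'a::{finite,zero} poly. degree f \<le> m}"
proof -
  have "{f :: 'a poly. degree f \<le> m} \<subseteq> Poly ` {xs. set xs \<subseteq> UNIV \<and> length xs = Suc m}"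
  proof
    fix f :: "'a poly" assume "f \<in> {f. degree f \<le> m}"
    then have d: "degree f \<le> m" by simp
    have "f = Poly (map (coeff f) [0..<Suc m])"
    proof (rule poly_eqI)
      fix i
      show "coeff f i = coeff (Poly (map (coeff f) [0..<Suc m])) i"
        using d by (auto simp: coeff_Poly_eq nth_default_def coeff_eq_0 simp del: upt_Suc)
    qed
    then show "f \<in> Poly ` {xs. set xs \<subseteq> UNIV \<and> length xs = Suc m}"
      by (intro image_eqI[where x = "map (coeff f) [0..<Suc m]"]) (simp_all del: upt_Suc)
  qed
  moreover have "finite (Poly ` {xs :: 'a list. set xs \<subseteq> UNIV \<and> length xs = Suc m})"
    by (intro finite_imageI finite_lists_length_eq) simp
  ultimately show ?thesis by (rule finite_subset)
qed

lemma lowv_sr: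
  fixes h :: "'a::field poly"
  assumes "reflect_poly h = h" "lead_coeff h = 1" "degree h = n"
  shows "lowv (Suc l) h = 1 # topv l n h"
proof (rule nth_equalityI)
  show "length (lowv (Suc l) h) = length (1 # topv l n h)" by simp
  fix i assume "i < length (lowv (Suc l) h)"
  then have i: "i < Suc l" by simp
  show "lowv (Suc l) h ! i = (1 # topv l n h) ! i"
  proof (cases i)
    case 0
    have "coeff h 0 = 1" using coeff_0_reflect_poly[of h] assms by simp
    then show ?thesis using 0 by (simp add: nth_lowv)
  next
    case (Suc m)
    then have m: "m < l" using i by simp
    have "topc h n (Suc m) = coeff (reflect_poly h) (Suc m)" using assms(3) by (rule topc_reflect)
    then have "topc h n (Suc m) = coeff h (Suc m)" using assms(1) by simp
    then show ?thesis using Suc m i by (simp add: nth_lowv nth_topv del: nth_Cons_Suc)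
  qed
qed


section \<open>Counting\<close>

definition Hset :: "nat \<Rightarrow> 'a::field list \<Rightarrow> 'a poly set" where
  "Hset n c = {h. lead_coeff h = 1 \<and> degree h = n \<and> irreducible h \<and> topv (length c) (2 * n) (h * star h) = c}"

definition Gset :: "nat \<Rightarrow> 'a::field list \<Rightarrow> 'a poly set" where
  "Gset n c = {g. lead_coeff g = 1 \<and> degree g = n \<and> irreducible g \<and> topv (length c) (2 * n) (Td n g) = c}"

definition Sset :: "nat \<Rightarrow> 'a::field list \<Rightarrow> 'a poly set" where
  "Sset n c = {f. lead_coeff f = 1 \<and> degree f = 2 * n \<and> irreducible f \<and> reflect_poly f = f \<and>
     topv (length c) (2 * n) f = c}"

definition Hsr :: "nat \<Rightarrow> 'a::field list \<Rightarrow> 'a poly set" where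
  "Hsr n c = {h \<in> Hset n c. reflect_poly h = h}"

definition Hnr :: "nat \<Rightarrow> 'a::field list \<Rightarrow> 'a poly set" where
  "Hnr n c = {h \<in> Hset n c. reflect_poly h \<noteq> h}"

lemma fin_sub: "A \<subseteq> {f :: 'a::{finite,zero} poly. degree f \<le> m} \<Longrightarrow> finite A"
  using finite_deg_le finite_subset by blast

lemma finite_Hset: "finite (Hset n (c :: 'a::{finite,field} list))"
  by (rule fin_sub[of _ n]) (auto simp: Hset_def)

lemma finite_Gset: "finite (Gset n (c :: 'a::{finite,field} list))"
  by (rule fin_sub[of _ n]) (auto simp: Gset_def)

lemma finite_Sset: "finite (Sset n (c :: 'a::{finite,field} list))"
  by (rule fin_sub[of _ "2 * n"]) (auto simp: Sset_def)

lemma Hnr_facts: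
  fixes h :: "'a::field poly"
  assumes "h \<in> Hnr n c" "n \<ge> 2"
  shows "irreducible h" "lead_coeff h = 1" "degree h = n" "coeff h 0 \<noteq> 0" "star h \<noteq> h"
    "reflect_poly h \<noteq> h" "topv (length c) (2 * n) (h * star h) = c"
proof -
  show i: "irreducible h" and l: "lead_coeff h = 1" and d: "degree h = n"
    and r: "reflect_poly h \<noteq> h" and t: "topv (length c) (2 * n) (h * star h) = c"
    using assms by (auto simp: Hnr_def Hset_def)
  have d2: "degree h \<ge> 2" using d assms(2) by simp
  show "coeff h 0 \<noteq> 0" using irred_coeff0[OF i d2] .
  show "star h \<noteq> h"
  proof
    assume "star h = h"
    then show False using sri[OF i l d2] r by blast
  qed
qed

lemma step1:
  fixes c :: "'a::{finite,field} list"
  assumes n2: "n \<ge> 2"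
  shows "card (Gset n c) = card (Sset n c) + card ((\<lambda>h. h * star h) ` Hnr n c)"
proof -
  define Q where "Q = (\<lambda>h. h * star h) ` Hnr n c"
  have finQ: "finite Q"
    unfolding Q_def by (rule finite_imageI, rule finite_subset[OF _ finite_Hset]) (auto simp: Hnr_def)
  have img: "Td n ` Gset n c = Sset n c \<union> Q"
  proof
    show "Td n ` Gset n c \<subseteq> Sset n c \<union> Q"
    proof
      fix f assume "f \<in> Td n ` Gset n c"
      then obtain g where g: "g \<in> Gset n c" "f = Td n g" by blast
      have irr: "irreducible g" and lg: "lead_coeff g = 1" and dg: "degree g = n"
        and tg: "topv (length c) (2 * n) (Td n g) = c" using g(1) by (auto simp: Gset_def)
      have cgn: "coeff g n = 1" using lg dg by simp
      show "f \<in> Sset n c \<union> Q"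
      proof (cases "irreducible (Td n g)")
        case True
        then have "Td n g \<in> Sset n c" using cgn tg
          by (simp add: Sset_def lead_Td degree_Td_eq reflect_Td coeff_Td_top)
        then show ?thesis using g by simp
      next
        case False
        then obtain h where h: "irreducible h" "lead_coeff h = 1" "degree h = n" "star h \<noteq> h"
          "Td n g = h * star h" using main_A[OF irr lg dg n2] by blast
        have "reflect_poly h \<noteq> h" using star_reflect_self h(2,4) by blast
        then have "h \<in> Hnr n c" using h tg by (simp add: Hnr_def Hset_def)
        then show ?thesis using h(5) g(2) by (simp add: Q_def)
      qed
    qed
  next
    show "Sset n c \<union> Q \<subseteq> Td n ` Gset n c"
    proof
      fix f assume "f \<in> Sset n c \<union> Q"
      then show "f \<in> Td n ` Gset n c"
      proof
        assume "f \<in> Sset n c"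
        then have irr: "irreducible f" and lf: "lead_coeff f = 1" and df: "degree f = 2 * n"
          and rf: "reflect_poly f = f" and tf: "topv (length c) (2 * n) f = c" by (auto simp: Sset_def)
        obtain g where g: "irreducible g" "lead_coeff g = 1" "degree g = n" "Td n g = f"
          using B1[OF irr lf df rf] by blast
        then have "g \<in> Gset n c" using tf by (simp add: Gset_def)
        then show ?thesis using g(4) by force
      next
        assume "f \<in> Q"
        then obtain h where h: "h \<in> Hnr n c" "f = h * star h" by (auto simp: Q_def)
        note hf = Hnr_facts[OF h(1) n2]
        obtain g where g: "irreducible g" "lead_coeff g = 1" "degree g = n" "Td n g = h * star h"
          using B2[OF hf(1,2,3) n2 hf(5)] by blast
        then have "g \<in> Gset n c" using hf(7) by (simp add: Gset_def)
        then show ?thesis using g(4) h(2) by force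
      qed
    qed
  qed
  have inj: "inj_on (Td n) (Gset n c)"
    by (rule inj_onI) (auto simp: Gset_def intro: Td_inj)
  have disj: "Sset n c \<inter> Q = {}"
  proof (rule ccontr)
    assume "Sset n c \<inter> Q \<noteq> {}"
    then obtain f where f: "f \<in> Sset n c" "f \<in> Q" by blast
    then obtain h where h: "h \<in> Hnr n c" "f = h * star h" by (auto simp: Q_def)
    note hf = Hnr_facts[OF h(1) n2]
    have irr: "irreducible f" using f(1) by (simp add: Sset_def)
    have "is_unit h \<or> is_unit (star h)" using irreducibleD[OF irr h(2)] .
    moreover have "h \<noteq> 0" "star h \<noteq> 0" using hf(2) star_lead[OF hf(4)] by auto
    moreover have "degree h = n" "degree (star h) = n" using hf(3) star_deg[OF hf(4)] by auto
    ultimately show False using n2 is_unit_iff_degree[of h] is_unit_iff_degree[of "star h"] by auto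
  qed
  have "card (Gset n c) = card (Td n ` Gset n c)" using card_image[OF inj] by simp
  also have "\<dots> = card (Sset n c) + card Q"
    using img disj finQ card_Un_disjoint[OF finite_Sset[of n c] finQ] by simp
  finally show ?thesis by (simp add: Q_def)
qed


lemma step2:
  fixes c :: "'a::{finite,field} list"
  assumes n2: "n \<ge> 2"
  shows "card (Hnr n c) = 2 * card ((\<lambda>h. h * star h) ` Hnr n c)"
proof -
  define Q where "Q = (\<lambda>h. h * star h) ` Hnr n c"
  define fib where "fib q = {h \<in> Hnr n c. h * star h = q}" for q
  have finHn: "finite (Hnr n c)" by (rule finite_subset[OF _ finite_Hset]) (auto simp: Hnr_def)
  have finQ: "finite Q" unfolding Q_def using finHn by simp
  have fibeq: "fib (h0 * star h0) = {h0, star h0} \<and> h0 \<noteq> star h0" if h0: "h0 \<in> Hnr n c" for h0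
  proof -
    note hf = Hnr_facts[OF h0 n2]
    have d2: "degree h0 \<ge> 2" using hf(3) n2 by simp
    have ss: "star (star h0) = h0" using star_star[OF hf(4,2)] .
    have sl: "lead_coeff (star h0) = 1" using star_lead[OF hf(4)] .
    have sH: "star h0 \<in> Hnr n c"
    proof -
      have "irreducible (star h0)" using star_irred[OF hf(1,4)] .
      moreover have "degree (star h0) = n" using star_deg[OF hf(4)] hf(3) by simp
      moreover have "star h0 * star (star h0) = h0 * star h0" using ss by (simp add: mult.commute)
      moreover have "reflect_poly (star h0) \<noteq> star h0"
      proof
        assume "reflect_poly (star h0) = star h0"
        then have "star (star h0) = star h0" using star_reflect_self[OF _ sl] by simp
        then show False using ss hf(5) by simp
      qed
      moreover have sseq: "star h0 * star (star h0) = h0 * star h0" using ss by (simp add: mult.commute)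
      then have "topv (length c) (2 * n) (star h0 * star (star h0)) = c"
        using hf(7) by (simp only:)
      ultimately show ?thesis using sl unfolding Hnr_def Hset_def by blast
    qed
    have "fib (h0 * star h0) \<subseteq> {h0, star h0}"
    proof
      fix h assume h: "h \<in> fib (h0 * star h0)"
      then have hH: "h \<in> Hnr n c" and eq: "h * star h = h0 * star h0" by (auto simp: fib_def)
      note hf2 = Hnr_facts[OF hH n2]
      have "h dvd h * star h" by simp
      then have "h dvd h0 * star h0" using eq by simp
      then have "h = h0 \<or> h = star h0" by (rule fibre[OF hf(1,2) d2 hf2(1,2)])
      then show "h \<in> {h0, star h0}" by blast
    qed
    moreover have "{h0, star h0} \<subseteq> fib (h0 * star h0)"
    proof -
      have "h0 \<in> fib (h0 * star h0)" using h0 by (simp add: fib_def)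
      moreover have "star h0 * star (star h0) = h0 * star h0" using ss by (simp add: mult.commute)
      then have "star h0 \<in> fib (h0 * star h0)" using sH by (simp add: fib_def)
      ultimately show ?thesis by simp
    qed
    ultimately have "fib (h0 * star h0) = {h0, star h0}" by (rule equalityI)
    moreover have "h0 \<noteq> star h0" using hf(5) by metis
    ultimately show ?thesis by blast
  qed
  have un: "Hnr n c = \<Union> (fib ` Q)"
    by (auto simp: fib_def Q_def)
  have "card (Hnr n c) = (\<Sum>q\<in>Q. card (fib q))"
    unfolding un
  proof (rule card_UN_disjoint)
    show "finite Q" by fact
    show "\<forall>q\<in>Q. finite (fib q)" using finHn by (auto simp: fib_def)
    show "\<forall>q\<in>Q. \<forall>q'\<in>Q. q \<noteq> q' \<longrightarrow> fib q \<inter> fib q' = {}" by (auto simp: fib_def)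
  qed
  also have "\<dots> = (\<Sum>q\<in>Q. 2)"
  proof (rule sum.cong[OF refl])
    fix q assume "q \<in> Q"
    then obtain h0 where h0: "h0 \<in> Hnr n c" "q = h0 * star h0" by (auto simp: Q_def)
    then show "card (fib q) = 2" using fibeq[OF h0(1)] by simp
  qed
  finally show ?thesis by (simp add: Q_def)
qed

lemma step3:
  fixes c :: "'a::{finite,field} list"
  shows "card (Hset n c) = card (Hsr n c) + card (Hnr n c)"
proof -
  have "Hset n c = Hsr n c \<union> Hnr n c" "Hsr n c \<inter> Hnr n c = {}" by (auto simp: Hsr_def Hnr_def)
  moreover have "finite (Hsr n c)" "finite (Hnr n c)"
    by (rule finite_subset[OF _ finite_Hset], auto simp: Hsr_def Hnr_def)+
  ultimately show ?thesis by (simp add: card_Un_disjoint)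
qed


lemma step4:
  fixes c :: "'a::{finite,field} list"
  assumes n2: "n \<ge> 2"
  shows "card (Hset n c) = (\<Sum>b\<in>{b. length b = length c + 1 \<and> b ! 0 \<noteq> 0}. I_count n (psi_inv b c) b)"
proof -
  define l where "l = length c"
  define B where "B = {b :: 'a list. length b = l + 1 \<and> b ! 0 \<noteq> 0}"
  define F where "F b = {h. lead_coeff h = 1 \<and> degree h = n \<and> irreducible h \<and>
      topv l n h = psi_inv b c \<and> lowv (Suc l) h = b}" for b
  have finB: "finite B" unfolding B_def
    by (rule finite_subset[OF _ finite_lists_len[of "l + 1"]]) auto
  have IF: "I_count n (psi_inv b c) b = card (F b)" if "b \<in> B" for b
  proof -
    have lb: "length b = Suc l" using that by (simp add: B_def)
    have lp: "length (psi_inv b c) = l" by (simp add: length_psi_inv l_def)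
    show ?thesis unfolding I_count_def F_def
      using top_cond[of "psi_inv b c"] low_cond[of b] lp lb by simp
  qed
  have coeff0: "coeff h 0 \<noteq> 0" if "irreducible h" "degree h = n" for h :: "'a poly"
    using irred_coeff0[OF that(1)] that(2) n2 by simp
  have un: "Hset n c = \<Union> (F ` B)"
  proof
    show "Hset n c \<subseteq> \<Union> (F ` B)"
    proof
      fix h assume h: "h \<in> Hset n c"
      then have hh: "lead_coeff h = 1" "degree h = n" "irreducible h" "topv l (2 * n) (h * star h) = c"
        by (auto simp: Hset_def l_def)
      have c0: "coeff h 0 \<noteq> 0" using coeff0 hh by blast
      define b where "b = lowv (Suc l) h"
      have bB: "b \<in> B" using c0 by (simp add: B_def b_def nth_lowv)
      have "psi b (topv l n h) = c" using psi_top[OF hh(1,2) c0, of l] hh(4) by (simp add: b_def)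
      then have "topv l n h = psi_inv b c" using psi_inv_iff[of "topv l n h" c b] by (simp add: l_def)
      then have "h \<in> F b" using hh by (simp add: F_def b_def)
      then show "h \<in> \<Union> (F ` B)" using bB by blast
    qed
  next
    show "\<Union> (F ` B) \<subseteq> Hset n c"
    proof
      fix h assume "h \<in> \<Union> (F ` B)"
      then obtain b where b: "b \<in> B" "h \<in> F b" by blast
      then have hh: "lead_coeff h = 1" "degree h = n" "irreducible h" "topv l n h = psi_inv b c"
        "lowv (Suc l) h = b" by (auto simp: F_def)
      have c0: "coeff h 0 \<noteq> 0" using coeff0 hh by blast
      have "psi b (psi_inv b c) = c" using psi_inv_iff[of "psi_inv b c" c b] by (simp add: length_psi_inv)
      then have "topv l (2 * n) (h * star h) = c" using psi_top[OF hh(1,2) c0, of l] hh(4,5) by simp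
      then show "h \<in> Hset n c" using hh by (simp add: Hset_def l_def)
    qed
  qed
  have "card (Hset n c) = (\<Sum>b\<in>B. card (F b))"
    unfolding un
  proof (rule card_UN_disjoint)
    show "finite B" by fact
    show "\<forall>b\<in>B. finite (F b)" by (auto intro: fin_sub[of _ n] simp: F_def)
    show "\<forall>b\<in>B. \<forall>b'\<in>B. b \<noteq> b' \<longrightarrow> F b \<inter> F b' = {}" by (auto simp: F_def)
  qed
  also have "\<dots> = (\<Sum>b\<in>B. I_count n (psi_inv b c) b)" by (rule sum.cong[OF refl]) (simp add: IF)
  finally show ?thesis by (simp add: B_def l_def)
qed

lemma step5:
  fixes c :: "'a::{finite,field} list"
  assumes n2: "n \<ge> 2"
  shows "card (Hsr n c) = (\<Sum>a\<in>{a. length a = length c}. if psi (1 # a) a = c then S_half n a else 0)"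
proof (cases "even n")
  case False
  have "Hsr n c = {}"
  proof (rule ccontr)
    assume "Hsr n c \<noteq> {}"
    then obtain h where h: "h \<in> Hsr n c" by blast
    then have hh: "lead_coeff h = 1" "degree h = n" "irreducible h" "reflect_poly h = h"
      by (auto simp: Hsr_def Hset_def)
    have "star h = h" using star_reflect_self[OF hh(4,1)] .
    then have "even (degree h)" using sri[OF hh(3,1)] hh(2) n2 by simp
    then show False using False hh(2) by simp
  qed
  moreover have "(\<Sum>a\<in>{a :: 'a list. length a = length c}. if psi (1 # a) a = c then S_half n a else 0) = 0"
  proof (rule sum.neutral, rule ballI)
    fix a :: "'a list"
    have "S_half n a = 0" using False unfolding S_half_def by simp
    then show "(if psi (1 # a) a = c then S_half n a else 0) = 0" by simp
  qed
  ultimately show ?thesis by simp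
next
  case True
  define l where "l = length c"
  define A where "A = {a :: 'a list. length a = l}"
  define A' where "A' = {a \<in> A. psi (1 # a) a = c}"
  define E where "E a = {f :: 'a poly. lead_coeff f = 1 \<and> degree f = n \<and> irreducible f \<and> reflect_poly f = f \<and>
      topv l n f = a}" for a
  have finA: "finite A" unfolding A_def by (rule finite_lists_len)
  have SE: "S_half n a = card (E a)" if "a \<in> A" for a
  proof -
    have n: "2 * (n div 2) = n" using True by simp
    have la: "length a = l" using that by (simp add: A_def)
    show ?thesis unfolding S_half_def S_count_def E_def
      using True n top_cond[of a] la by simp
  qed
  have coeff0: "coeff h 0 \<noteq> 0" if "irreducible h" "degree h = n" for h :: "'a poly"
    using irred_coeff0[OF that(1)] that(2) n2 by simp
  have un: "Hsr n c = \<Union> (E ` A')"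
  proof
    show "Hsr n c \<subseteq> \<Union> (E ` A')"
    proof
      fix h assume h: "h \<in> Hsr n c"
      then have hh: "lead_coeff h = 1" "degree h = n" "irreducible h" "topv l (2 * n) (h * star h) = c"
        "reflect_poly h = h" by (auto simp: Hsr_def Hset_def l_def)
      have c0: "coeff h 0 \<noteq> 0" using coeff0 hh by blast
      define a where "a = topv l n h"
      have "psi (1 # a) a = c"
        using psi_top[OF hh(1,2) c0, of l] hh(4) lowv_sr[OF hh(5,1,2), of l] by (simp add: a_def)
      then have "a \<in> A'" by (simp add: A'_def A_def a_def)
      moreover have "h \<in> E a" using hh by (simp add: E_def a_def)
      ultimately show "h \<in> \<Union> (E ` A')" by blast
    qed
  next
    show "\<Union> (E ` A') \<subseteq> Hsr n c"
    proof
      fix h assume "h \<in> \<Union> (E ` A')"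
      then obtain a where a: "a \<in> A'" "h \<in> E a" by blast
      then have hh: "lead_coeff h = 1" "degree h = n" "irreducible h" "reflect_poly h = h" "topv l n h = a"
        by (auto simp: E_def)
      have pa: "psi (1 # a) a = c" using a(1) by (simp add: A'_def)
      have c0: "coeff h 0 \<noteq> 0" using coeff0 hh by blast
      have "topv l (2 * n) (h * star h) = c"
        using psi_top[OF hh(1,2) c0, of l] lowv_sr[OF hh(4,1,2), of l] hh(5) pa by simp
      then show "h \<in> Hsr n c" using hh by (simp add: Hsr_def Hset_def l_def)
    qed
  qed
  have "card (Hsr n c) = (\<Sum>a\<in>A'. card (E a))"
    unfolding un
  proof (rule card_UN_disjoint)
    show "finite A'" using finA by (simp add: A'_def)
    show "\<forall>a\<in>A'. finite (E a)" by (auto intro: fin_sub[of _ n] simp: E_def)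
    show "\<forall>a\<in>A'. \<forall>a'\<in>A'. a \<noteq> a' \<longrightarrow> E a \<inter> E a' = {}" by (auto simp: E_def)
  qed
  also have "\<dots> = (\<Sum>a\<in>A. if psi (1 # a) a = c then card (E a) else 0)"
    unfolding A'_def using finA by (rule sum.inter_filter)
  also have "\<dots> = (\<Sum>a\<in>A. if psi (1 # a) a = c then S_half n a else 0)"
    by (rule sum.cong[OF refl]) (simp add: SE)
  finally show ?thesis by (simp add: A_def l_def)
qed

lemma eqS:
  fixes c :: "'a::{finite,field} list"
  shows "S_count n c = card (Sset n c)"
  unfolding S_count_def Sset_def using top_cond[of c] by simp

lemma eqG:
  fixes c :: "'a::{finite,field} list"
  shows "I_count n (phi_inv n c) [] = card (Gset n c)"
proof -
  have "{f. lead_coeff f = 1 \<and> degree f = n \<and> irreducible f \<and>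
      (\<forall>j\<in>{1..length (phi_inv n c)}. topc f n j = phi_inv n c ! (j - 1)) \<and>
      (\<forall>j<length ([] :: 'a list). coeff f j = [] ! j)} = Gset n c"
    unfolding Gset_def
  proof (rule Collect_cong)
    fix f :: "'a poly"
    have "(lead_coeff f = 1 \<and> degree f = n) \<Longrightarrow>
      ((\<forall>j\<in>{1..length (phi_inv n c)}. topc f n j = phi_inv n c ! (j - 1)) \<longleftrightarrow>
       topv (length c) (2 * n) (Td n f) = c)"
    proof -
      assume fd: "lead_coeff f = 1 \<and> degree f = n"
      have "(\<forall>j\<in>{1..length (phi_inv n c)}. topc f n j = phi_inv n c ! (j - 1)) \<longleftrightarrow>
          topv (length c) n f = phi_inv n c"
        using top_cond[of "phi_inv n c" f n] by (simp add: length_phi_inv)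
      also have "\<dots> \<longleftrightarrow> phi n (topv (length c) n f) = c" by (rule phi_inv_iff) simp
      also have "\<dots> \<longleftrightarrow> topv (length c) (2 * n) (Td n f) = c"
        using phi_top[OF conjunct1[OF fd] conjunct2[OF fd], of "length c"] by simp
      finally show ?thesis .
    qed
    then show "(lead_coeff f = 1 \<and> degree f = n \<and> irreducible f \<and>
      (\<forall>j\<in>{1..length (phi_inv n c)}. topc f n j = phi_inv n c ! (j - 1)) \<and>
      (\<forall>j<length ([] :: 'a list). coeff f j = [] ! j)) =
      (lead_coeff f = 1 \<and> degree f = n \<and> irreducible f \<and> topv (length c) (2 * n) (Td n f) = c)"
      by auto
  qed
  then show ?thesis by (simp add: I_count_def)
qed

theorem theorem1:
  fixes c :: "'a::{finite,field} list" and n :: nat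
  assumes "n > 1"
  shows "real (S_count n c) =
     1/2 * (\<Sum>a\<in>{a :: 'a list. length a = length c}.
              (if psi (1 # a) a = c then real (S_half n a) else 0))
     + real (I_count n (phi_inv n c) [])
     - 1/2 * (\<Sum>b\<in>{b :: 'a list. length b = length c + 1 \<and> b ! 0 \<noteq> 0}.
              real (I_count n (psi_inv b c) b))"
proof -
  have n2: "n \<ge> 2" using assms by simp
  define Q where "Q = (\<lambda>h. h * star h) ` Hnr n c"
  have e1: "card (Gset n c) = card (Sset n c) + card Q" using step1[OF n2] by (simp add: Q_def)
  have e2: "card (Hnr n c) = 2 * card Q" using step2[OF n2] by (simp add: Q_def)
  have e3: "card (Hset n c) = card (Hsr n c) + card (Hnr n c)" by (rule step3)
  have s1: "(\<Sum>a\<in>{a :: 'a list. length a = length c}. (if psi (1 # a) a = c then real (S_half n a) else 0))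
      = real (card (Hsr n c))"
  proof -
    have "(\<Sum>a\<in>{a :: 'a list. length a = length c}. (if psi (1 # a) a = c then real (S_half n a) else 0))
      = (\<Sum>a\<in>{a :: 'a list. length a = length c}. real (if psi (1 # a) a = c then S_half n a else 0))"
      by (rule sum.cong) auto
    also have "\<dots> = real (card (Hsr n c))" using step5[OF n2, of c] by (simp only: of_nat_sum)
    finally show ?thesis .
  qed
  have s2: "(\<Sum>b\<in>{b :: 'a list. length b = length c + 1 \<and> b ! 0 \<noteq> 0}. real (I_count n (psi_inv b c) b))
      = real (card (Hset n c))"
    using step4[OF n2, of c] by (simp add: of_nat_sum)
  have r1: "real (card (Gset n c)) = real (card (Sset n c)) + real (card Q)" using e1 by simp
  have r2: "real (card (Hnr n c)) = 2 * real (card Q)" using e2 by simp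
  have r3: "real (card (Hset n c)) = real (card (Hsr n c)) + real (card (Hnr n c))" using e3 by simp
  show ?thesis unfolding s1 s2 eqS eqG using r1 r2 r3 by linarith
qed

end
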